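(* Let $w,w'\in W^{\mathfrak p}$ and consider a circle (connected component) of the circle diagram $\overline{C(w')}C(w)$. (1) If the circle crosses the middle (the line $x=0$), then either for every linked pair of which it contains an arc it contains both arcs of that pair, or for every linked pair of which it contains an arc it contains only one arc of that pair. (2) If the circle contains only one arc of each linked pair it meets, then the number of distinct linked pairs it meets is even. (3) If the circle contains both arcs of each linked pair it meets, then the number of distinct linked pairs it meets is odd.
   Context: Let $n\ge4$, $W$ the Weyl group of type $D_n$ with simple reflections $s_0,\dots,s_{n-1}$ ($s_0,s_1$ both joined to $s_2$, $s_i$ joined to $s_{i+1}$ for $i\ge2$), $W_{\mathfrak p}=\langle s_1,\dots,s_{n-1}\rangle$, $W^{\mathfrak p}$ the minimal length representatives of $W_{\mathfrak p}\backslash W$. For $w\in W^{\mathfrak p}$ let $(\alpha_1,\dots,\alpha_n)=(+,\dots,+)\cdot w$ for the right action on $\{+,-\}^n$ where $s_i$ ($i\ge1$) swaps entries $i,i+1$ and $s_0$ sends $(a_1,a_2,\dots)$ to $(-a_2,-a_1,\dots)$; set $\alpha_{-i}=-\alpha_i$. Label $P=\{-2n,\dots,-1,1,\dots,2n\}$ by $+$ at $j<-n$, $-$ at $j>n$, $\alpha_j$ at $1\le|j|\le n$. The cup diagram $C(w)$ is obtained from the unique non-crossing matching of $P$ by arcs in the lower half plane joining each $+$ to a $-$ on its right, by replacing, for the arcs $(-y_1,y_1),\dots,(-y_{2k},y_{2k})$ crossing $0$ ($y_1<\dots<y_{2k}$), each pair $(-y_{2j-1},y_{2j-1}),(-y_{2j},y_{2j})$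 by the two arcs joining $-y_{2j}$ to $y_{2j-1}$ and $-y_{2j-1}$ to $y_{2j}$, which cross on $x=0$ and form a linked pair of cups. The cap diagram $\overline{C(w')}$ is the reflection of $C(w')$ in the horizontal axis (its linked pairs are the reflections of those of $C(w')$). The circle diagram $\overline{C(w')}C(w)$ is the union of the cups of $C(w)$ and the caps of $\overline{C(w')}$; every point of $P$ lies on exactly one cup and one cap, so it is a union of closed curves (called circles), which can cross only at the crossing points of linked pairs. A circle meets (contains) a linked pair if it contains at least one of its two arcs. *)

theory Defs
  imports Main
begin

text \<open>Simple reflections: s_0 sends e1 to -e2 and e2 to -e1; s_i (i >= 1) swaps e_i and e_(i+1).
  s_0, s_1 are both joined to s_2 in the Dynkin diagram.  Elements of W are the products of
  simple reflections, realized (faithfully) as signed permutations int => int.\<close>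

definition sgen :: "nat \<Rightarrow> int \<Rightarrow> int" where
  "sgen i x =
    (if i = 0 then
       (if x = 1 then -2 else if x = 2 then -1 else if x = -1 then 2 else if x = -2 then 1 else x)
     else
       (if x = int i then int i + 1 else if x = int i + 1 then int i
        else if x = - int i then - (int i + 1) else if x = - (int i + 1) then - int i else x))"

definition perm_of :: "nat list \<Rightarrow> int \<Rightarrow> int" where
  "perm_of ws = foldr (\<lambda>i f. sgen i \<circ> f) ws id"

definition W_elt :: "nat \<Rightarrow> (int \<Rightarrow> int) \<Rightarrow> bool" where
  "W_elt n g \<longleftrightarrow> (\<exists>ws. set ws \<subseteq> {..<n} \<and> perm_of ws = g)"

definition lenW :: "nat \<Rightarrow> (int \<Rightarrow> int) \<Rightarrow> nat" where
  "lenW n g = (LEAST k. \<exists>ws. set ws \<subseteq> {..<n} \<and> length ws = k \<and> perm_of ws = g)"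

text \<open>W^p: minimal length representatives of the right cosets W_p w, W_p = <s_1,...,s_(n-1)>.\<close>
definition in_Wp :: "nat \<Rightarrow> (int \<Rightarrow> int) \<Rightarrow> bool" where
  "in_Wp n g \<longleftrightarrow> W_elt n g \<and>
     (\<forall>us. set us \<subseteq> {1..<n} \<longrightarrow> lenW n g \<le> lenW n (perm_of us \<circ> g))"

text \<open>Sign sequences: nat => bool, entries at 1..n, True = +, False = -.\<close>
definition act_gen :: "nat \<Rightarrow> (nat \<Rightarrow> bool) \<Rightarrow> nat \<Rightarrow> bool" where
  "act_gen i a =
    (if i = 0 then a(1 := \<not> a 2, 2 := \<not> a 1) else a(i := a (Suc i), Suc i := a i))"

definition act_word :: "(nat \<Rightarrow> bool) \<Rightarrow> nat list \<Rightarrow> nat \<Rightarrow> bool" where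
  "act_word a ws = foldl (\<lambda>b i. act_gen i b) a ws"

definition signs :: "nat \<Rightarrow> (int \<Rightarrow> int) \<Rightarrow> nat \<Rightarrow> bool" where
  "signs n g = act_word (\<lambda>_. True) (SOME ws. set ws \<subseteq> {..<n} \<and> perm_of ws = g)"

definition Pts :: "nat \<Rightarrow> int set" where
  "Pts n = {- 2 * int n .. 2 * int n} - {0}"

definition lab :: "nat \<Rightarrow> (nat \<Rightarrow> bool) \<Rightarrow> int \<Rightarrow> bool" where
  "lab n al j =
    (if j < - int n then True else if j > int n then False
     else if j > 0 then al (nat j) else \<not> al (nat (- j)))"

text \<open>Arcs are pairs (x,y) with x < y.  A non-crossing matching of P in the lower half plane
  joining each + to a - on its right.\<close>
definition nc_matching :: "nat \<Rightarrow> (nat \<Rightarrow> bool) \<Rightarrow> (int \<times> int) set \<Rightarrow> bool" where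
  "nc_matching n al M \<longleftrightarrow>
     (\<forall>(x, y) \<in> M. x \<in> Pts n \<and> y \<in> Pts n \<and> x < y \<and> lab n al x \<and> \<not> lab n al y) \<and>
     (\<forall>p \<in> Pts n. \<exists>!e. e \<in> M \<and> (p = fst e \<or> p = snd e)) \<and>
     (\<forall>(a, b) \<in> M. \<forall>(c, d) \<in> M. \<not> (a < c \<and> c < b \<and> b < d))"

definition matching :: "nat \<Rightarrow> (nat \<Rightarrow> bool) \<Rightarrow> (int \<times> int) set" where
  "matching n al = (THE M. nc_matching n al M)"

definition crossing_arcs :: "(int \<times> int) set \<Rightarrow> (int \<times> int) set" where
  "crossing_arcs M = {e \<in> M. fst e < 0 \<and> 0 < snd e}"

text \<open>y_1 < ... < y_(2k): right endpoints of the arcs crossing 0 (list is 0-indexed).\<close>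
definition ys_of :: "nat \<Rightarrow> (nat \<Rightarrow> bool) \<Rightarrow> int list" where
  "ys_of n al = sorted_list_of_set (snd ` crossing_arcs (matching n al))"

text \<open>Linked pairs: for the j-th pair, arcs joining -y_(2j) to y_(2j-1) and -y_(2j-1) to y_(2j).\<close>
definition linked_pairs :: "nat \<Rightarrow> (nat \<Rightarrow> bool) \<Rightarrow> (int \<times> int) set set" where
  "linked_pairs n al =
     (let ys = ys_of n al in
      {{(- (ys ! (2 * j + 1)), ys ! (2 * j)), (- (ys ! (2 * j)), ys ! (2 * j + 1))} | j.
         j < length ys div 2})"

definition cup_arcs :: "nat \<Rightarrow> (nat \<Rightarrow> bool) \<Rightarrow> (int \<times> int) set" where
  "cup_arcs n al =
     (matching n al - crossing_arcs (matching n al)) \<union> \<Union> (linked_pairs n al)"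

text \<open>Tagged arcs: (False, e) is a cup of C(w), (True, e) is a cap of the reflection of C(w').\<close>
type_synonym tarc = "bool \<times> int \<times> int"

definition CD_arcs :: "nat \<Rightarrow> (int \<Rightarrow> int) \<Rightarrow> (int \<Rightarrow> int) \<Rightarrow> tarc set" where
  "CD_arcs n w' w = Pair False ` cup_arcs n (signs n w) \<union> Pair True ` cup_arcs n (signs n w')"

definition CD_linked :: "nat \<Rightarrow> (int \<Rightarrow> int) \<Rightarrow> (int \<Rightarrow> int) \<Rightarrow> tarc set set" where
  "CD_linked n w' w =
     image (Pair False) ` linked_pairs n (signs n w) \<union> image (Pair True) ` linked_pairs n (signs n w')"

definition share_end :: "tarc \<Rightarrow> tarc \<Rightarrow> bool" where
  "share_end e f \<longleftrightarrow> {fst (snd e), snd (snd e)} \<inter> {fst (snd f), snd (snd f)} \<noteq> {}"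

text \<open>Circles: connected components (arcs linked through common endpoints; crossings of
  linked pairs do not connect).\<close>
definition circles :: "nat \<Rightarrow> (int \<Rightarrow> int) \<Rightarrow> (int \<Rightarrow> int) \<Rightarrow> tarc set set" where
  "circles n w' w =
     (let A = CD_arcs n w' w in
      {{f. (e, f) \<in> {(x, y). x \<in> A \<and> y \<in> A \<and> share_end x y}\<^sup>*} | e. e \<in> A})"

definition crosses_middle :: "tarc set \<Rightarrow> bool" where
  "crosses_middle C \<longleftrightarrow> (\<exists>e \<in> C. fst (snd e) < 0 \<and> 0 < snd (snd e))"

definition meets :: "tarc set \<Rightarrow> tarc set \<Rightarrow> bool" where
  "meets C L \<longleftrightarrow> L \<inter> C \<noteq> {}"

end

theory Submission
  imports Defs
begin

definition sig :: "int \<times> int \<Rightarrow> int \<times> int" where "sig e = (- snd e, - fst e)"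
definition mm :: "int \<Rightarrow> int \<Rightarrow> int \<times> int" where "mm a b = (min a b, max a b)"

lemma mm_comm: "mm a b = mm b a" by (auto simp: mm_def)
lemma sig_mm: "sig (mm a b) = mm (-a) (-b)" by (auto simp: mm_def sig_def)
lemma mm_eq: "mm a b = mm a c \<Longrightarrow> b = c" by (auto simp: mm_def min_def max_def split: if_splits)
lemma mm_eq2: "mm a b = mm a' b' \<Longrightarrow> (a = a' \<and> b = b') \<or> (a = b' \<and> b = a')"
  by (auto simp: mm_def min_def max_def split: if_splits)

locale pmatch =
  fixes X :: "int set" and U :: "(int \<times> int) set"
  assumes finX: "finite X" and X0: "0 \<notin> X" and Xsym: "x \<in> X \<Longrightarrow> -x \<in> X"
  and arcs: "e \<in> U \<Longrightarrow> fst e \<in> X \<and> snd e \<in> X \<and> fst e < snd e"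
  and cover: "p \<in> X \<Longrightarrow> \<exists>!e. e \<in> U \<and> (p = fst e \<or> p = snd e)"
  and sym: "e \<in> U \<Longrightarrow> sig e \<in> U"
  and nofix: "e \<in> U \<Longrightarrow> fst e \<noteq> - snd e"
begin

definition partner :: "int \<Rightarrow> int" where "partner p = (THE q. mm p q \<in> U)"

lemma ex_mm: assumes "p \<in> X" shows "\<exists>q. mm p q \<in> U"
proof -
  obtain e where e: "e \<in> U" "p = fst e \<or> p = snd e" using cover[OF assms] by blast
  show ?thesis
  proof (cases "p = fst e")
    case True
    then have "mm p (snd e) = e" using arcs[OF e(1)] by (cases e) (auto simp: mm_def)
    then show ?thesis using e by metis
  next
    case False
    then have "mm p (fst e) = e" using e arcs[OF e(1)] by (cases e) (auto simp: mm_def)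
    then show ?thesis using e by metis
  qed
qed

lemma uniq_at: assumes "p \<in> X" "e \<in> U" "p = fst e \<or> p = snd e" "f \<in> U" "p = fst f \<or> p = snd f"
  shows "e = f" using cover[OF assms(1)] assms by blast

lemma mm_end: "p = fst (mm p q) \<or> p = snd (mm p q)" by (auto simp: mm_def)

lemma mm_uniq: assumes "p \<in> X" "mm p q \<in> U" "mm p q' \<in> U" shows "q = q'"
  using uniq_at[OF assms(1) assms(2) mm_end assms(3) mm_end] mm_eq by blast

lemma partner_eq: assumes "p \<in> X" "mm p q \<in> U" shows "partner p = q"
  unfolding partner_def using assms mm_uniq by blast

lemma pU: assumes "p \<in> X" shows "mm p (partner p) \<in> U"
  using ex_mm[OF assms] partner_eq[OF assms] by auto

lemma partner_X: assumes "p \<in> X" shows "partner p \<in> X"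
  using arcs[OF pU[OF assms]] by (auto simp: mm_def min_def max_def split: if_splits)

lemma partner_ne: assumes "p \<in> X" shows "partner p \<noteq> p"
  using arcs[OF pU[OF assms]] by (auto simp: mm_def)

lemma partner_inv: assumes "p \<in> X" shows "partner (partner p) = p"
  using partner_eq[OF partner_X[OF assms]] pU[OF assms] mm_comm by metis

lemma partner_neg: assumes "p \<in> X" shows "partner (- p) = - partner p"
  using partner_eq[OF Xsym[OF assms]] sym[OF pU[OF assms]] sig_mm by metis

lemma partner_nsym: assumes "p \<in> X" shows "partner p \<noteq> - p"
  using nofix[OF pU[OF assms]] by (auto simp: mm_def min_def max_def split: if_splits)

lemma partner_uniq: assumes "p \<in> X" "e \<in> U" "p = fst e \<or> p = snd e" shows "e = mm p (partner p)"
  using uniq_at[OF assms pU[OF assms(1)] mm_end] .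

lemma ends_X: "e \<in> U \<Longrightarrow> fst e \<in> X \<and> snd e \<in> X" using arcs by blast

end


primrec walk :: "(int \<Rightarrow> int) \<Rightarrow> (int \<Rightarrow> int) \<Rightarrow> nat \<Rightarrow> int \<Rightarrow> int" where
  "walk c d 0 p = p"
| "walk c d (Suc k) p = (if even k then c else d) (walk c d k p)"

definition cr :: "tarc \<Rightarrow> bool" where "cr f \<longleftrightarrow> fst (snd f) < 0 \<and> 0 < snd (snd f)"
definition tsig :: "tarc \<Rightarrow> tarc" where "tsig f = (fst f, sig (snd f))"

lemma tsig_tsig: "tsig (tsig f) = f" by (simp add: tsig_def sig_def)
lemma cr_tsig: "cr f \<Longrightarrow> cr (tsig f)" by (simp add: tsig_def sig_def cr_def)

lemma parity_chg: fixes s :: "nat \<Rightarrow> bool" shows "a \<le> m \<Longrightarrow> even (card {k. a \<le> k \<and> k < m \<and> s k \<noteq> s (Suc k)}) \<longleftrightarrow> (s a = s m)"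
proof (induction m)
  case 0 then show ?case by simp
next
  case (Suc m)
  show ?case
  proof (cases "a = Suc m")
    case True
    then have e: "{k. a \<le> k \<and> k < Suc m \<and> s k \<noteq> s (Suc k)} = {}" by auto
    show ?thesis unfolding e using True by simp
  next
    case False
    then have am: "a \<le> m" using Suc.prems by simp
    have eq: "{k. a \<le> k \<and> k < Suc m \<and> s k \<noteq> s (Suc k)} =
      {k. a \<le> k \<and> k < m \<and> s k \<noteq> s (Suc k)} \<union> (if s m \<noteq> s (Suc m) then {m} else {})"
      using am by (auto simp: less_Suc_eq)
    have fin: "finite {k. a \<le> k \<and> k < m \<and> s k \<noteq> s (Suc k)}" by simp
    show ?thesis
    proof (cases "s m \<noteq> s (Suc m)")
      case True
      have "card {k. a \<le> k \<and> k < Suc m \<and> s k \<noteq> s (Suc k)} = Suc (card {k. a \<le> k \<and> k < m \<and> s k \<noteq> s (Suc k)})"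
        unfolding eq using True fin by simp
      then show ?thesis using Suc.IH[OF am] True by auto
    next
      case False
      then show ?thesis using Suc.IH[OF am] eq by simp
    qed
  qed
qed

locale two = cu: pmatch X U + ca: pmatch X V for X U V
begin

abbreviation "c \<equiv> cu.partner"
abbreviation "d \<equiv> ca.partner"
abbreviation "w \<equiv> walk c d"
definition stp :: "nat \<Rightarrow> int \<Rightarrow> int" where "stp k = (if even k then c else d)"

lemma w_Suc: "w (Suc k) p = stp k (w k p)" by (simp add: stp_def)
declare walk.simps(2)[simp del]

lemma stp_X: "q \<in> X \<Longrightarrow> stp k q \<in> X" by (simp add: stp_def cu.partner_X ca.partner_X)
lemma stp_inv: "q \<in> X \<Longrightarrow> stp k (stp k q) = q" by (simp add: stp_def cu.partner_inv ca.partner_inv)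
lemma stp_ne: "q \<in> X \<Longrightarrow> stp k q \<noteq> q" by (simp add: stp_def cu.partner_ne ca.partner_ne)
lemma stp_nsym: "q \<in> X \<Longrightarrow> stp k q \<noteq> - q" by (simp add: stp_def cu.partner_nsym ca.partner_nsym)
lemma stp_neg: "q \<in> X \<Longrightarrow> stp k (- q) = - stp k q" by (simp add: stp_def cu.partner_neg ca.partner_neg)
lemma stp_par: "even k = even l \<Longrightarrow> stp k = stp l" by (simp add: stp_def)

lemma w_X: "p \<in> X \<Longrightarrow> w k p \<in> X"
  by (induction k) (auto simp: w_Suc stp_X simp del: walk.simps(2))

lemma w_neg: "p \<in> X \<Longrightarrow> w k (- p) = - w k p"
  by (induction k) (auto simp: w_Suc stp_neg w_X simp del: walk.simps(2))

lemma w_back: "p \<in> X \<Longrightarrow> stp k (w (Suc k) p) = w k p"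
  by (simp add: w_Suc stp_inv w_X del: walk.simps(2))

lemma w_rev: assumes "p \<in> X" "q \<in> X" "w a p = w b q" "odd (a + b)"
  shows "t \<le> b \<Longrightarrow> w (a + t) p = w (b - t) q"
proof (induction t)
  case 0 then show ?case using assms by simp
next
  case (Suc t)
  then have IH: "w (a + t) p = w (b - t) q" by simp
  obtain k where k: "b = Suc t + k" using Suc.prems le_Suc_ex by blast
  have bt: "b - t = Suc (b - Suc t)" using k by simp
  have bk: "b - Suc t = k" using k by simp
  have par: "even (a + t) = even (b - Suc t)" unfolding bk using assms(4) k by presburger
  have "w (a + Suc t) p = stp (a + t) (w (b - t) q)" using IH by (simp add: w_Suc del: walk.simps(2))
  also have "\<dots> = stp (b - Suc t) (w (Suc (b - Suc t)) q)" using bt stp_par[OF par] by simp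
  also have "\<dots> = w (b - Suc t) q" by (rule w_back[OF assms(2)])
  finally show ?case .
qed

lemma w_back_same: assumes "p \<in> X" "q \<in> X" "w a p = w b q" "even (a + b)"
  shows "t \<le> a \<Longrightarrow> t \<le> b \<Longrightarrow> w (a - t) p = w (b - t) q"
proof (induction t)
  case 0 then show ?case using assms by simp
next
  case (Suc t)
  then have IH: "w (a - t) p = w (b - t) q" by simp
  obtain k where k: "a = Suc t + k" using Suc.prems le_Suc_ex by blast
  obtain l where l: "b = Suc t + l" using Suc.prems le_Suc_ex by blast
  have at: "a - t = Suc (a - Suc t)" and bt: "b - t = Suc (b - Suc t)" using k l by auto
  have ak: "a - Suc t = k" "b - Suc t = l" using k l by simp_all
  have par: "even (a - Suc t) = even (b - Suc t)" unfolding ak using assms(4) k l by presburger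
  have "w (a - Suc t) p = stp (a - Suc t) (w (Suc (a - Suc t)) p)" by (rule w_back[OF assms(1), symmetric])
  also have "\<dots> = stp (b - Suc t) (w (Suc (b - Suc t)) q)" using IH at bt stp_par[OF par] by simp
  also have "\<dots> = w (b - Suc t) q" by (rule w_back[OF assms(2)])
  finally show ?case .
qed

lemma w_fwd_same: assumes "w a p = w b q" "even (a + b)"
  shows "w (a + t) p = w (b + t) q"
proof (induction t)
  case 0 then show ?case using assms by simp
next
  case (Suc t)
  have par: "even (a + t) = even (b + t)" using assms(2) by auto
  show ?case using Suc stp_par[OF par] by (simp add: w_Suc del: walk.simps(2))
qed

lemma w_add: "even a \<Longrightarrow> w (a + k) p = w k (w a p)"
  using w_fwd_same[of a p 0 "w a p"] by simp

lemma no_refl: assumes "p \<in> X" "odd (a + b)" shows "w a p \<noteq> w b p"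
proof
  assume eq: "w a p = w b p"
  have gen: "w a' p \<noteq> w b' p" if "a' < b'" "odd (a' + b')" for a' b'
  proof
    assume e: "w a' p = w b' p"
    define t where "t = (b' - a') div 2"
    have tb: "t \<le> b'" unfolding t_def by simp
    define v where "v = b' - a'"
    have v: "b' = a' + v" using that(1) unfolding v_def by simp
    have "odd v" using that(2) v by presburger
    then obtain u where "v = 2 * u + 1" using oddE by blast
    then have u: "b' - a' = 2 * u + 1" using v by simp
    have tu: "t = u" unfolding t_def u by simp
    have bt: "b' - t = Suc (a' + t)" using u tu that(1) by simp
    have "w (a' + t) p = w (b' - t) p" using w_rev[OF assms(1) assms(1) e that(2) tb] .
    also have "\<dots> = stp (a' + t) (w (a' + t) p)" using bt by (simp add: w_Suc del: walk.simps(2))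
    finally have eq2: "w (a' + t) p = stp (a' + t) (w (a' + t) p)" .
    have ne: "stp (a' + t) (w (a' + t) p) \<noteq> w (a' + t) p" by (rule stp_ne[OF w_X[OF assms(1)]])
    show False using ne eq2 by argo
  qed
  have "a \<noteq> b" using assms(2) by auto
  then show False
  proof (cases "a < b")
    case True then show False using gen[of a b] eq assms(2) by blast
  next
    case False then have "b < a" using \<open>a \<noteq> b\<close> by simp
    then show False using gen[of b a] eq assms(2) by (simp add: add.commute)
  qed
qed

lemma no_sym_odd: assumes "p \<in> X" "odd b" shows "w b p \<noteq> - p"
proof
  assume e: "w b p = - p"
  define t where "t = b div 2"
  have tb: "t \<le> b" unfolding t_def by simp
  obtain u where u: "b = 2 * u + 1" using assms(2) oddE by blast
  have bt: "b - t = Suc t" unfolding t_def u by simp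
  have e0: "w 0 (- p) = w b p" using e by simp
  have o: "odd (0 + b)" using assms(2) by simp
  have "w (0 + t) (- p) = w (b - t) p" by (rule w_rev[OF cu.Xsym[OF assms(1)] assms(1) e0 o tb])
  then have eq2: "- w t p = stp t (w t p)" using bt w_neg[OF assms(1)] by (simp add: w_Suc del: walk.simps(2))
  have ne: "stp t (w t p) \<noteq> - w t p" by (rule stp_nsym[OF w_X[OF assms(1)]])
  show False using ne eq2 by argo
qed


lemma period_ex: assumes "p \<in> X" shows "\<exists>P>0. w P p = p"
proof -
  let ?f = "\<lambda>k. w (2*k) p"
  have sub: "?f ` {0..card X} \<subseteq> X" using w_X assms by auto
  have "card (?f ` {0..card X}) \<le> card X" by (rule card_mono[OF cu.finX sub])
  then have "\<not> inj_on ?f {0..card X}" using card_image by fastforce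
  then obtain i j where ij: "i \<noteq> j" "?f i = ?f j" unfolding inj_on_def by blast
  have gen: "\<exists>P>0. w P p = p" if "i' < j'" "?f i' = ?f j'" for i' j'
  proof -
    have "w (2*i' - 2*i') p = w (2*j' - 2*i') p"
      by (rule w_back_same[OF assms assms that(2)]) (use that(1) in auto)
    then show ?thesis using that(1) by (intro exI[of _ "2*j' - 2*i'"]) auto
  qed
  show ?thesis
  proof (cases "i < j")
    case True then show ?thesis using gen ij by blast
  next
    case False then have "j < i" using ij(1) by simp
    then show ?thesis using gen ij by metis
  qed
qed

definition per :: "int \<Rightarrow> nat" where "per p = (LEAST P. 0 < P \<and> w P p = p)"

lemma per: assumes "p \<in> X" shows "0 < per p" "w (per p) p = p"
  using LeastI_ex[OF period_ex[OF assms]] unfolding per_def by auto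

lemma per_min: assumes "0 < a" "a < per p" shows "w a p \<noteq> p"
  using not_less_Least[OF assms(2)[unfolded per_def]] assms(1) by blast

lemma per_even: assumes "p \<in> X" shows "even (per p)"
proof (rule ccontr)
  assume "odd (per p)"
  then have "w 0 p \<noteq> w (per p) p" using no_refl[OF assms, of 0 "per p"] by simp
  then show False using per[OF assms] by simp
qed

lemma w_perN: assumes "p \<in> X" shows "w (per p + m) p = w m p"
  using w_add[OF per_even[OF assms], of m p] per[OF assms] by simp

lemma w_per: assumes "p \<in> X" shows "w (q * per p + m) p = w m p"
proof (induction q)
  case 0 then show ?case by simp
next
  case (Suc q)
  have "Suc q * per p + m = per p + (q * per p + m)" by simp
  then show ?case using w_perN[OF assms, of "q * per p + m"] Suc by (simp only:)
qed

lemma w_mod: assumes "p \<in> X" shows "w k p = w (k mod per p) p"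
  using w_per[OF assms, of "k div per p" "k mod per p"] by simp

lemma w_inj_lt: assumes "p \<in> X" "k < l" "l < per p" "w k p = w l p" shows False
proof (cases "even (k + l)")
  case True
  have "w (k + (per p - k)) p = w (l + (per p - k)) p" by (rule w_fwd_same[OF assms(4) True])
  moreover have e1: "k + (per p - k) = per p" and e2: "l + (per p - k) = per p + (l - k)" using assms by auto
  ultimately have "w (per p) p = w (per p + (l - k)) p" by (simp only: e1 e2)
  then have "p = w (l - k) p" unfolding per(2)[OF assms(1)] w_perN[OF assms(1)] .
  moreover have "l - k < per p" "0 < l - k" using assms by auto
  ultimately show False using per_min[of "l - k" p] by simp
next
  case False
  then show False using no_refl[OF assms(1) False] assms(4) by simp
qed

lemma w_inj: assumes "p \<in> X" "k < per p" "l < per p" "w k p = w l p" shows "k = l"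
  using w_inj_lt[OF assms(1) _ assms(3) assms(4)] w_inj_lt[OF assms(1) _ assms(2) assms(4)[symmetric]]
  by (metis linorder_neqE_nat)

definition T :: "nat \<Rightarrow> int \<Rightarrow> tarc" where "T k p = (odd k, mm (w k p) (w (Suc k) p))"

lemma T_inj: assumes "p \<in> X" "k < per p" "l < per p" "T k p = T l p" shows "k = l"
proof -
  have o: "odd k = odd l" and m: "mm (w k p) (w (Suc k) p) = mm (w l p) (w (Suc l) p)"
    using assms(4) by (auto simp: T_def)
  from mm_eq2[OF m] show ?thesis
  proof
    assume "w k p = w l p \<and> w (Suc k) p = w (Suc l) p"
    then show ?thesis using w_inj[OF assms(1-3)] by blast
  next
    assume h: "w k p = w (Suc l) p \<and> w (Suc k) p = w l p"
    have "odd (k + Suc l)" using o by simp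
    then show ?thesis using no_refl[OF assms(1)] h by blast
  qed
qed

lemma T_mod: assumes "p \<in> X" shows "T k p = T (k mod per p) p"
proof -
  have "odd k = odd (k mod per p)" using per_even[OF assms]
    by (metis dvd_mod_iff)
  moreover have "w (Suc k) p = w (Suc (k mod per p)) p"
    using w_mod[OF assms, of "Suc k"] w_mod[OF assms, of "Suc (k mod per p)"] by (simp add: mod_Suc_eq)
  ultimately show ?thesis using w_mod[OF assms, of k] by (simp add: T_def)
qed

lemma T_range: assumes "p \<in> X" shows "range (\<lambda>k. T k p) = (\<lambda>k. T k p) ` {..<per p}"
proof
  show "range (\<lambda>k. T k p) \<subseteq> (\<lambda>k. T k p) ` {..<per p}"
  proof
    fix f assume "f \<in> range (\<lambda>k. T k p)"
    then obtain k where "f = T k p" by blast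
    then have "f = T (k mod per p) p" using T_mod[OF assms] by simp
    moreover have "k mod per p < per p" using per(1)[OF assms] by simp
    ultimately show "f \<in> (\<lambda>k. T k p) ` {..<per p}" by blast
  qed
qed auto

definition AA :: "tarc set" where "AA = Pair False ` U \<union> Pair True ` V"
definition RR :: "(tarc \<times> tarc) set" where "RR = {(x, y). x \<in> AA \<and> y \<in> AA \<and> share_end x y}"
definition ends :: "tarc \<Rightarrow> int set" where "ends g = {fst (snd g), snd (snd g)}"

lemma share_ends: "share_end x y \<longleftrightarrow> ends x \<inter> ends y \<noteq> {}"
  by (simp add: share_end_def ends_def)

lemma T_A: assumes "p \<in> X" shows "T k p \<in> AA"
proof (cases "even k")
  case True
  then have "T k p = (False, mm (w k p) (c (w k p)))" by (simp add: T_def w_Suc stp_def)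
  then show ?thesis using cu.pU[OF w_X[OF assms]] by (simp add: AA_def)
next
  case False
  then have "T k p = (True, mm (w k p) (d (w k p)))" by (simp add: T_def w_Suc stp_def)
  then show ?thesis using ca.pU[OF w_X[OF assms]] by (simp add: AA_def)
qed

lemma T_ends: "ends (T k p) = {w k p, w (Suc k) p}"
  by (auto simp: T_def ends_def mm_def min_def max_def simp del: walk.simps(2))

lemma AA_ends: "g \<in> AA \<Longrightarrow> ends g \<subseteq> X"
  using cu.ends_X ca.ends_X by (auto simp: AA_def ends_def)

lemma at_point: assumes "q \<in> X" "g \<in> AA" "q \<in> ends g"
  shows "g = (False, mm q (c q)) \<or> g = (True, mm q (d q))"
proof -
  from assms(2) consider e where "e \<in> U" "g = (False, e)" | e where "e \<in> V" "g = (True, e)"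
    by (auto simp: AA_def)
  then show ?thesis
  proof cases
    case 1
    then have "e = mm q (c q)" using cu.partner_uniq[OF assms(1) 1(1)] assms(3) by (auto simp: ends_def)
    then show ?thesis using 1 by simp
  next
    case 2
    then have "e = mm q (d q)" using ca.partner_uniq[OF assms(1) 2(1)] assms(3) by (auto simp: ends_def)
    then show ?thesis using 2 by simp
  qed
qed

lemma arc_in_range: assumes "p \<in> X" "g \<in> AA" "w j p \<in> ends g"
  shows "g \<in> range (\<lambda>k. T k p)"
proof -
  define q where "q = w j p"
  define m where "m = j + per p - 1"
  have N2: "per p \<ge> 2" using per[OF assms(1)] per_even[OF assms(1)] by presburger
  have sm: "Suc m = per p + j" unfolding m_def using N2 by simp
  have wsm: "w (Suc m) p = q" unfolding sm q_def by (rule w_perN[OF assms(1)])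
  have wm: "w m p = stp m q" using w_back[OF assms(1), of m] wsm by simp
  have pm: "odd m = even j" unfolding m_def using N2 per_even[OF assms(1)] by presburger
  have qX: "q \<in> X" unfolding q_def by (rule w_X[OF assms(1)])
  have Tj: "T j p = (odd j, mm q (stp j q))" by (simp add: T_def q_def w_Suc del: walk.simps(2))
  have Tm: "T m p = (even j, mm q (stp m q))" using wm wsm pm by (simp add: T_def mm_comm)
  from at_point[OF qX assms(2)] assms(3) have "g = (False, mm q (c q)) \<or> g = (True, mm q (d q))"
    unfolding q_def by blast
  moreover have "stp j = (if even j then c else d)" "stp m = (if even j then d else c)"
    using pm by (auto simp: stp_def)
  ultimately have "g = T j p \<or> g = T m p" using Tj Tm by (cases "even j") auto
  then show ?thesis by blast
qed

lemma comp_eq: assumes "e \<in> AA" "p \<in> ends e"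
  shows "{f. (e, f) \<in> RR\<^sup>*} = range (\<lambda>k. T k p)"
proof
  have pX: "p \<in> X" using AA_ends[OF assms(1)] assms(2) by blast
  show "{f. (e, f) \<in> RR\<^sup>*} \<subseteq> range (\<lambda>k. T k p)"
  proof
    fix f assume "f \<in> {f. (e, f) \<in> RR\<^sup>*}"
    then have "(e, f) \<in> RR\<^sup>*" by simp
    then show "f \<in> range (\<lambda>k. T k p)"
    proof (induction rule: rtrancl_induct)
      case base
      show ?case using arc_in_range[OF pX assms(1), of 0] assms(2) by simp
    next
      case (step y z)
      then obtain k where y: "y = T k p" by blast
      from step(2) have z: "z \<in> AA" "ends y \<inter> ends z \<noteq> {}" by (auto simp: RR_def share_ends)
      then obtain q where q: "q \<in> ends y" "q \<in> ends z" by blast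
      then have "q = w k p \<or> q = w (Suc k) p" using y T_ends by auto
      then show ?case using arc_in_range[OF pX z(1)] q(2) by blast
    qed
  qed
  show "range (\<lambda>k. T k p) \<subseteq> {f. (e, f) \<in> RR\<^sup>*}"
  proof
    fix f assume "f \<in> range (\<lambda>k. T k p)"
    then obtain k where f: "f = T k p" by blast
    have "(e, T k p) \<in> RR\<^sup>*"
    proof (induction k)
      case 0
      have "p \<in> ends (T 0 p)" by (simp add: T_ends)
      then have "(e, T 0 p) \<in> RR" using assms T_A[OF pX] by (auto simp: RR_def share_ends)
      then show ?case by simp
    next
      case (Suc k)
      have "w (Suc k) p \<in> ends (T k p)" "w (Suc k) p \<in> ends (T (Suc k) p)" by (auto simp: T_ends)
      then have "(T k p, T (Suc k) p) \<in> RR" using T_A[OF pX] by (auto simp: RR_def share_ends)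
      then show ?case using Suc by (rule rtrancl_into_rtrancl[rotated])
    qed
    then show "f \<in> {f. (e, f) \<in> RR\<^sup>*}" using f by simp
  qed
qed

lemma RR_sym: "(x, y) \<in> RR \<Longrightarrow> (y, x) \<in> RR"
  by (auto simp: RR_def share_end_def)

lemma comp_same: assumes "(e, f) \<in> RR\<^sup>*" shows "{g. (f, g) \<in> RR\<^sup>*} = {g. (e, g) \<in> RR\<^sup>*}"
proof -
  have "(f, e) \<in> RR\<^sup>*" using assms
  proof (induction rule: rtrancl_induct)
    case base then show ?case by simp
  next
    case (step y z)
    then show ?case using RR_sym by (meson converse_rtrancl_into_rtrancl)
  qed
  then show ?thesis using assms by (auto intro: rtrancl_trans)
qed


lemma tsig_A: "f \<in> AA \<Longrightarrow> tsig f \<in> AA"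
  using cu.sym ca.sym by (auto simp: AA_def tsig_def)

lemma tsig_ne: assumes "f \<in> AA" shows "tsig f \<noteq> f"
proof
  assume "tsig f = f"
  then have h: "fst (snd f) = - snd (snd f)" by (auto simp: tsig_def sig_def prod_eq_iff)
  have "snd f \<in> U \<or> snd f \<in> V" using assms by (auto simp: AA_def)
  then show False using cu.nofix ca.nofix h by blast
qed

lemma tsig_T: "p \<in> X \<Longrightarrow> tsig (T k p) = T k (- p)"
  by (simp add: T_def tsig_def sig_mm w_neg del: walk.simps(2))

lemma cr_T: assumes "p \<in> X" shows "cr (T k p) \<longleftrightarrow> ((w k p < 0) \<noteq> (w (Suc k) p < 0))"
proof -
  have "w k p \<noteq> 0" "w (Suc k) p \<noteq> 0" using w_X[OF assms] cu.X0 by metis+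
  then show ?thesis by (auto simp: cr_def T_def mm_def min_def max_def simp del: walk.simps(2))
qed

lemma card_cr: assumes "p \<in> X"
  shows "card {f \<in> range (\<lambda>k. T k p). cr f} = card {k. k < per p \<and> ((w k p < 0) \<noteq> (w (Suc k) p < 0))}"
proof -
  have "{f \<in> range (\<lambda>k. T k p). cr f} = (\<lambda>k. T k p) ` {k. k < per p \<and> cr (T k p)}"
    unfolding T_range[OF assms] by auto
  moreover have "inj_on (\<lambda>k. T k p) {k. k < per p \<and> cr (T k p)}"
    using T_inj[OF assms] by (auto simp: inj_on_def)
  ultimately show ?thesis using card_image cr_T[OF assms] by simp
qed

lemma comp_AA: "(e, g) \<in> RR\<^sup>* \<Longrightarrow> e \<in> AA \<Longrightarrow> g \<in> AA"
  by (induction rule: rtrancl_induct) (auto simp: RR_def)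

theorem main:
  fixes Lk :: "tarc set set" and C :: "tarc set"
  assumes Lk1: "\<And>L. L \<in> Lk \<Longrightarrow> \<exists>l\<in>AA. cr l \<and> L = {l, tsig l}"
  and Lk2: "\<And>l. l \<in> AA \<Longrightarrow> cr l \<Longrightarrow> \<exists>L\<in>Lk. l \<in> L"
  and Cc: "C \<in> {{f. (e, f) \<in> RR\<^sup>*} | e. e \<in> AA}"
  shows "(crosses_middle C \<longrightarrow>
            (\<forall>L \<in> Lk. meets C L \<longrightarrow> L \<subseteq> C) \<or>
            (\<forall>L \<in> Lk. meets C L \<longrightarrow> card (L \<inter> C) = 1))
       \<and> ((\<forall>L \<in> Lk. meets C L \<longrightarrow> card (L \<inter> C) = 1) \<longrightarrow>
            even (card {L \<in> Lk. meets C L}))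
       \<and> ((\<exists>L \<in> Lk. meets C L) \<and>
          (\<forall>L \<in> Lk. meets C L \<longrightarrow> L \<subseteq> C) \<longrightarrow>
            odd (card {L \<in> Lk. meets C L}))"
proof -
  obtain e where e: "e \<in> AA" "C = {f. (e, f) \<in> RR\<^sup>*}" using Cc by blast
  have CA: "C \<subseteq> AA" using e comp_AA by blast
  have Crep: "C = range (\<lambda>k. T k q)" if "g \<in> C" "q \<in> ends g" for g q
  proof -
    have "(e, g) \<in> RR\<^sup>*" using that e by simp
    then have "C = {f. (g, f) \<in> RR\<^sup>*}" using comp_same e by blast
    then show ?thesis using comp_eq[OF _ that(2)] that CA by blast
  qed
  have Cfin: "finite C"
  proof -
    have "e \<in> C" using e by simp
    moreover have "fst (snd e) \<in> ends e" by (simp add: ends_def)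
    ultimately have "C = (\<lambda>k. T k (fst (snd e))) ` {..<per (fst (snd e))}"
      using Crep T_range AA_ends[OF e(1)] by blast
    then show ?thesis by simp
  qed
  have LL: "L = {f, tsig f}" "cr f" "f \<in> AA" if LH: "L \<in> Lk" "f \<in> L" for L f
  proof -
    obtain l where l: "l \<in> AA" "cr l" "L = {l, tsig l}" using Lk1[OF LH(1)] by blast
    then have "f = l \<or> f = tsig l" using LH(2) by blast
    then show "L = {f, tsig f}" "cr f" "f \<in> AA"
      using l tsig_tsig[of l] cr_tsig[of l] tsig_A[of l] by auto
  qed
  define CC where "CC = {f \<in> C. cr f}"
  define MS where "MS = {L \<in> Lk. meets C L}"
  have MS_img: "MS = (\<lambda>f. {f, tsig f}) ` CC"
  proof
    show "MS \<subseteq> (\<lambda>f. {f, tsig f}) ` CC"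
    proof
      fix L assume "L \<in> MS"
      then obtain f where f: "L \<in> Lk" "f \<in> L" "f \<in> C" by (auto simp: MS_def meets_def)
      then show "L \<in> (\<lambda>f. {f, tsig f}) ` CC" using LL[OF f(1,2)] by (auto simp: CC_def)
    qed
    show "(\<lambda>f. {f, tsig f}) ` CC \<subseteq> MS"
    proof
      fix L assume "L \<in> (\<lambda>f. {f, tsig f}) ` CC"
      then obtain f where f: "f \<in> C" "cr f" "L = {f, tsig f}" by (auto simp: CC_def)
      obtain L' where "L' \<in> Lk" "f \<in> L'" using Lk2[of f] f CA by blast
      then show "L \<in> MS" using LL f by (auto simp: MS_def meets_def)
    qed
  qed
  have symC: "tsig f \<in> C" if l: "l \<in> C" "tsig l \<in> C" and f: "f \<in> C" for l f
  proof -
    define q where "q = fst (snd l)"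
    have qe: "q \<in> ends l" unfolding q_def ends_def by simp
    have qX: "q \<in> X" using AA_ends CA l(1) qe by blast
    have nq: "- q \<in> ends (tsig l)" unfolding q_def ends_def tsig_def sig_def by simp
    obtain k where k: "f = T k q" using Crep[OF l(1) qe] f by blast
    have "tsig f = T k (- q)" using tsig_T[OF qX] k by simp
    then show ?thesis using Crep[OF l(2) nq] by simp
  qed
  have P1: "(\<forall>L \<in> Lk. meets C L \<longrightarrow> L \<subseteq> C) \<or> (\<forall>L \<in> Lk. meets C L \<longrightarrow> card (L \<inter> C) = 1)"
  proof (cases "\<exists>l\<in>C. tsig l \<in> C")
    case True
    then obtain l where l: "l \<in> C" "tsig l \<in> C" by blast
    have "L \<subseteq> C" if LM: "L \<in> Lk" "meets C L" for L
    proof -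
      obtain f where f: "f \<in> L" "f \<in> C" using LM by (auto simp: meets_def)
      have "L = {f, tsig f}" using LL(1)[OF LM(1) f(1)] .
      moreover have "tsig f \<in> C" using symC[OF l f(2)] .
      ultimately show ?thesis using f by auto
    qed
    then show ?thesis by blast
  next
    case False
    have "card (L \<inter> C) = 1" if LM: "L \<in> Lk" "meets C L" for L
    proof -
      obtain f where f: "f \<in> L" "f \<in> C" using LM by (auto simp: meets_def)
      then have "L \<inter> C = {f}" using LL[OF LM(1) f(1)] False by auto
      then show ?thesis by simp
    qed
    then show ?thesis by blast
  qed
  define q0 where "q0 = fst (snd e)"
  have q0e: "q0 \<in> ends e" by (simp add: q0_def ends_def)
  have q0X: "q0 \<in> X" using AA_ends[OF e(1)] q0e by blast
  have eC: "e \<in> C" using e by simp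
  have P2: "even (card MS)" if h: "\<forall>L \<in> Lk. meets C L \<longrightarrow> card (L \<inter> C) = 1"
  proof -
    have inj: "inj_on (\<lambda>f. {f, tsig f}) CC"
    proof (rule inj_onI)
      fix f g assume fg: "f \<in> CC" "g \<in> CC" "{f, tsig f} = {g, tsig g}"
      show "f = g"
      proof (rule ccontr)
        assume "f \<noteq> g"
        then have fg2: "f = tsig g" using fg(3) by blast
        have "{g, tsig g} \<in> MS" using MS_img fg(2) by blast
        then have c1: "card ({g, tsig g} \<inter> C) = 1" using h by (auto simp: MS_def)
        have "{g, tsig g} \<inter> C = {g, tsig g}" using fg fg2 by (auto simp: CC_def)
        moreover have "tsig g \<noteq> g" using tsig_ne[of g] fg(2) CA unfolding CC_def by blast
        ultimately show False using c1 by simp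
      qed
    qed
    have "card MS = card CC" using MS_img card_image[OF inj] by simp
    also have "\<dots> = card {k. k < per q0 \<and> ((w k q0 < 0) \<noteq> (w (Suc k) q0 < 0))}"
      unfolding CC_def using card_cr[OF q0X] Crep[OF eC q0e] by simp
    finally have cm: "card MS = card {k. 0 \<le> k \<and> k < per q0 \<and> ((w k q0 < 0) \<noteq> (w (Suc k) q0 < 0))}" by simp
    show ?thesis unfolding cm using parity_chg[of 0 "per q0" "\<lambda>k. w k q0 < 0"] per[OF q0X] by simp
  qed
  have P3: "odd (card MS)" if h1: "\<exists>L \<in> Lk. meets C L" and h2: "\<forall>L \<in> Lk. meets C L \<longrightarrow> L \<subseteq> C"
  proof -
    have CCU: "CC = \<Union> MS"
    proof
      show "CC \<subseteq> \<Union> MS" using MS_img by blast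
      show "\<Union> MS \<subseteq> CC" using h2 LL by (auto simp: MS_def CC_def)
    qed
    have disj: "pairwise disjnt MS"
    proof (rule pairwiseI)
      fix L1 L2 assume L12: "L1 \<in> MS" "L2 \<in> MS" "L1 \<noteq> L2"
      have "L1 \<in> Lk" "L2 \<in> Lk" using L12 unfolding MS_def by auto
      show "disjnt L1 L2" unfolding disjnt_def
      proof (rule ccontr)
        assume "L1 \<inter> L2 \<noteq> {}"
        then obtain f where f: "f \<in> L1" "f \<in> L2" by blast
        have "L1 = {f, tsig f}" by (rule LL(1)[OF \<open>L1 \<in> Lk\<close> f(1)])
        moreover have "L2 = {f, tsig f}" by (rule LL(1)[OF \<open>L2 \<in> Lk\<close> f(2)])
        ultimately show False using L12(3) by simp
      qed
    qed
    have c2: "card L = 2" if LM: "L \<in> MS" for L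
    proof -
      obtain f where "f \<in> L" "L \<in> Lk" using LM by (auto simp: MS_def meets_def)
      then have "L = {f, tsig f}" "f \<in> AA" using LL by blast+
      moreover have "tsig f \<noteq> f" using tsig_ne[OF \<open>f \<in> AA\<close>] .
      ultimately show ?thesis by auto
    qed
    have finL: "finite L" if "L \<in> MS" for L
      by (rule card_ge_0_finite) (simp add: c2[OF that])
    have cCC: "card CC = 2 * card MS"
      using card_Union_disjoint[OF disj finL] c2 CCU by simp
    obtain L where L: "L \<in> Lk" "meets C L" using h1 by blast
    obtain l where l: "l \<in> L" "l \<in> C" using L by (auto simp: meets_def)
    have lt: "tsig l \<in> C" using h2 L LL[OF L(1) l(1)] by auto
    define q where "q = fst (snd l)"
    have qe: "q \<in> ends l" unfolding q_def ends_def by simp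
    have qX: "q \<in> X" using AA_ends CA l(2) qe by blast
    have nq: "- q \<in> ends (tsig l)" unfolding q_def ends_def tsig_def sig_def by simp
    have Cq: "C = range (\<lambda>k. T k q)" by (rule Crep[OF l(2) qe])
    obtain k where "tsig l = T k q" using lt Cq by blast
    then have "- q = w k q \<or> - q = w (Suc k) q" using nq T_ends by auto
    then have "\<exists>b0. w b0 q = - q" by (elim disjE) (rule exI, simp)+
    then obtain b0 where b0: "w b0 q = - q" by blast
    define N where "N = per q"
    define b where "b = b0 mod N"
    have wb: "w b q = - q" using b0 w_mod[OF qX, of b0] unfolding b_def N_def by simp
    have bN: "b < N" unfolding b_def N_def using per(1)[OF qX] by simp
    have beven: "even b" using no_sym_odd[OF qX] wb by blast
    have b0': "b \<noteq> 0"
    proof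
      assume "b = 0"
      then have "q = - q" using wb by simp
      then have "q = 0" by simp
      then show False using cu.X0 qX by simp
    qed
    have shift: "w (b + k) q = - w k q" for k
      using w_add[OF beven, of k q] wb w_neg[OF qX] by simp
    have w2b: "w (b + b) q = q" using shift[of b] wb by simp
    have N2b: "N = b + b"
    proof (rule ccontr)
      assume ne: "N \<noteq> b + b"
      show False
      proof (cases "b + b < N")
        case True then show False using per_min[of "b + b" q] w2b b0' unfolding N_def by simp
      next
        case False
        then have e: "N + (b + b - N) = b + b" by simp
        have "w (b + b - N) q = w (N + (b + b - N)) q" using w_perN[OF qX, of "b + b - N"] unfolding N_def by simp
        then have "w (b + b - N) q = q" unfolding e w2b .
        moreover have "0 < b + b - N" "b + b - N < N" using False ne bN by auto
        ultimately show False using per_min[of "b + b - N" q] unfolding N_def by simp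
      qed
    qed
    define chg where "chg k \<longleftrightarrow> ((w k q < 0) \<noteq> (w (Suc k) q < 0))" for k
    have nz: "w k q \<noteq> 0" for k using w_X[OF qX, of k] cu.X0 by auto
    have chg_shift: "chg (b + k) = chg k" for k
    proof -
      have "w (b + Suc k) q = - w (Suc k) q" by (rule shift)
      then show ?thesis using shift[of k] nz[of k] nz[of "Suc k"] unfolding chg_def by auto
    qed
    have "card CC = card {k. k < N \<and> chg k}"
      unfolding CC_def using card_cr[OF qX] Cq unfolding N_def chg_def by simp
    also have "{k. k < N \<and> chg k} = {k. k < b \<and> chg k} \<union> (\<lambda>k. b + k) ` {k. k < b \<and> chg k}"
    proof
      show "{k. k < N \<and> chg k} \<subseteq> {k. k < b \<and> chg k} \<union> (\<lambda>k. b + k) ` {k. k < b \<and> chg k}"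
      proof
        fix k assume k: "k \<in> {k. k < N \<and> chg k}"
        show "k \<in> {k. k < b \<and> chg k} \<union> (\<lambda>k. b + k) ` {k. k < b \<and> chg k}"
        proof (cases "k < b")
          case True then show ?thesis using k by simp
        next
          case False
          then have "k = b + (k - b)" "k - b < b" using k N2b by auto
          moreover have "chg (k - b)" using chg_shift[of "k - b"] k \<open>k = b + (k - b)\<close> by simp
          ultimately show ?thesis by blast
        qed
      qed
      show "{k. k < b \<and> chg k} \<union> (\<lambda>k. b + k) ` {k. k < b \<and> chg k} \<subseteq> {k. k < N \<and> chg k}"
        using N2b chg_shift by auto
    qed
    also have "card \<dots> = card {k. k < b \<and> chg k} + card ((\<lambda>k. b + k) ` {k. k < b \<and> chg k})"
      by (rule card_Un_disjoint) auto
    also have "card ((\<lambda>k. b + k) ` {k. k < b \<and> chg k}) = card {k. k < b \<and> chg k}"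
      by (rule card_image) (auto simp: inj_on_def)
    finally have cc: "card CC = 2 * card {k. k < b \<and> chg k}" by simp
    have "odd (card {k. 0 \<le> k \<and> k < b \<and> chg k})"
      using parity_chg[of 0 b "\<lambda>k. w k q < 0"] wb nz[of 0] unfolding chg_def by auto
    then have "odd (card {k. k < b \<and> chg k})" by simp
    then show ?thesis using cc cCC by simp
  qed
  show ?thesis using P1 P2 P3 unfolding MS_def by blast
qed

end

lemma Pts_iff: "x \<in> Pts n \<longleftrightarrow> - 2 * int n \<le> x \<and> x \<le> 2 * int n \<and> x \<noteq> 0"
  by (auto simp: Pts_def)
lemma Pts_fin: "finite (Pts n)" by (simp add: Pts_def)
lemma Pts_0: "0 \<notin> Pts n" by (simp add: Pts_def)
lemma Pts_sym: "x \<in> Pts n \<Longrightarrow> - x \<in> Pts n" by (auto simp: Pts_iff)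

lemma lab_neg: assumes "x \<in> Pts n" shows "lab n al (- x) = (\<not> lab n al x)"
  using assms by (auto simp: lab_def Pts_iff)

locale lb =
  fixes n :: nat and al :: "nat \<Rightarrow> bool"
begin

abbreviation "X \<equiv> Pts n"
abbreviation "lb \<equiv> lab n al"
definition sg :: "int \<Rightarrow> int" where "sg j = (if lb j then 1 else -1)"
definition h :: "int \<Rightarrow> int" where "h t = (\<Sum>j \<in> {j \<in> X. j \<le> t}. sg j)"

lemma sg_neg: "j \<in> X \<Longrightarrow> sg (- j) = - sg j" by (simp add: sg_def lab_neg)

lemma h_split: assumes "s \<le> t" shows "h t = h s + (\<Sum>j \<in> {j \<in> X. s < j \<and> j \<le> t}. sg j)"
proof -
  have "{j \<in> X. j \<le> t} = {j \<in> X. j \<le> s} \<union> {j \<in> X. s < j \<and> j \<le> t}" using assms by auto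
  moreover have "{j \<in> X. j \<le> s} \<inter> {j \<in> X. s < j \<and> j \<le> t} = {}" by auto
  ultimately show ?thesis unfolding h_def by (simp add: sum.union_disjoint Pts_fin)
qed

lemma h_step: "h t = h (t - 1) + (if t \<in> X then sg t else 0)"
proof -
  have eqt: "\<And>j::int. (t - 1 < j \<and> j \<le> t) = (j = t)" by arith
  have "{j \<in> X. t - 1 < j \<and> j \<le> t} = (if t \<in> X then {t} else {})" using eqt by auto
  then show ?thesis using h_split[of "t - 1" t] by simp
qed

lemma h_low: "t < - 2 * int n \<Longrightarrow> h t = 0"
proof -
  assume "t < - 2 * int n"
  then have "{j \<in> X. j \<le> t} = {}" by (auto simp: Pts_iff)
  then show ?thesis unfolding h_def by (metis sum.empty)
qed

lemma sum_neg: "(\<Sum>j \<in> {j \<in> X. P j}. sg (- j)) = (\<Sum>j \<in> {j \<in> X. P (- j)}. sg j)"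
proof -
  have "(\<Sum>j \<in> {j \<in> X. P (- j)}. sg j) = (\<Sum>j \<in> uminus ` {j \<in> X. P j}. sg j)"
  proof -
    have "{j \<in> X. P (- j)} = uminus ` {j \<in> X. P j}"
    proof
      show "{j \<in> X. P (- j)} \<subseteq> uminus ` {j \<in> X. P j}"
      proof
        fix x assume "x \<in> {j \<in> X. P (- j)}"
        then have "- x \<in> {j \<in> X. P j}" using Pts_sym by simp
        then show "x \<in> uminus ` {j \<in> X. P j}" by (metis image_eqI minus_minus)
      qed
    qed (auto simp: Pts_sym)
    then show ?thesis by simp
  qed
  also have "\<dots> = (\<Sum>j \<in> {j \<in> X. P j}. sg (- j))"
    by (subst sum.reindex) (auto simp: inj_on_def)
  finally show ?thesis by simp
qed

lemma h_total: "h t = 0" if "2 * int n \<le> t"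
proof -
  have e: "{j \<in> X. j \<le> t} = {j \<in> X. True}" using that by (auto simp: Pts_iff)
  have "(\<Sum>j \<in> {j \<in> X. True}. sg (- j)) = (\<Sum>j \<in> {j \<in> X. True}. sg j)"
    using sum_neg[of "\<lambda>_. True"] by simp
  moreover have "(\<Sum>j \<in> {j \<in> X. True}. sg (- j)) = - (\<Sum>j \<in> {j \<in> X. True}. sg j)"
    by (simp add: sg_neg sum_negf)
  ultimately have "(\<Sum>j \<in> {j \<in> X. True}. sg j) = 0" by simp
  then show ?thesis unfolding h_def e .
qed

lemma h_sym: "h t = h (- t - 1)"
proof -
  have "h (2 * int n + \<bar>t\<bar>) = h t + (\<Sum>j \<in> {j \<in> X. t < j \<and> j \<le> 2 * int n + \<bar>t\<bar>}. sg j)"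
    by (rule h_split) simp
  moreover have "{j \<in> X. t < j \<and> j \<le> 2 * int n + \<bar>t\<bar>} = {j \<in> X. t < j}" by (auto simp: Pts_iff)
  moreover have "(\<Sum>j \<in> {j \<in> X. t < j}. sg j) = (\<Sum>j \<in> {j \<in> X. t < - j}. sg (- j))"
    using sum_neg[of "\<lambda>j. t < - j"] by simp
  moreover have "{j \<in> X. t < - j} = {j \<in> X. j \<le> - t - 1}" by auto
  moreover have "(\<Sum>j \<in> {j \<in> X. j \<le> - t - 1}. sg (- j)) = - h (- t - 1)"
    by (simp add: h_def sg_neg sum_negf)
  moreover have "h (2 * int n + \<bar>t\<bar>) = 0" by (rule h_total) simp
  ultimately show ?thesis by simp
qed

lemma sum_ge: "finite S \<Longrightarrow> (\<Sum>j \<in> S. sg j) \<ge> - int (card S)"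
proof -
  assume "finite S"
  have "(\<Sum>j \<in> S. sg j) \<ge> (\<Sum>j \<in> S. -1)" by (rule sum_mono) (simp add: sg_def)
  then show ?thesis by simp
qed

lemma h_nonneg: "h t \<ge> 0"
proof -
  have neg: "h t \<ge> 0" if "t \<le> -1" for t
  proof (cases "t < - int n")
    case True
    have "h t = (\<Sum>j \<in> {j \<in> X. j \<le> t}. 1)" unfolding h_def
      by (rule sum.cong) (use True in \<open>auto simp: sg_def lab_def\<close>)
    then show ?thesis by simp
  next
    case False
    have h1: "h (- int n - 1) = int n"
    proof -
      have "{j \<in> X. j \<le> - int n - 1} = {- 2 * int n .. - int n - 1}" by (auto simp: Pts_iff)
      moreover have "h (- int n - 1) = (\<Sum>j \<in> {j \<in> X. j \<le> - int n - 1}. 1)" unfolding h_def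
        by (rule sum.cong) (auto simp: sg_def lab_def)
      ultimately show ?thesis by simp
    qed
    have sub: "{j \<in> X. - int n - 1 < j \<and> j \<le> t} \<subseteq> {- int n .. -1}" using that by auto
    have "card {j \<in> X. - int n - 1 < j \<and> j \<le> t} \<le> card {- int n .. -1}"
      by (rule card_mono[OF _ sub]) simp
    then have c: "card {j \<in> X. - int n - 1 < j \<and> j \<le> t} \<le> n" by simp
    have "h t = h (- int n - 1) + (\<Sum>j \<in> {j \<in> X. - int n - 1 < j \<and> j \<le> t}. sg j)"
      by (rule h_split) (use False in simp)
    moreover have "(\<Sum>j \<in> {j \<in> X. - int n - 1 < j \<and> j \<le> t}. sg j) \<ge> - int (card {j \<in> X. - int n - 1 < j \<and> j \<le> t})"
      by (rule sum_ge) (simp add: Pts_fin)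
    ultimately show ?thesis using h1 c by linarith
  qed
  show ?thesis
  proof (cases "t \<le> -1")
    case True then show ?thesis using neg by simp
  next
    case False then show ?thesis using neg[of "- t - 1"] h_sym[of t] by simp
  qed
qed


lemma h_plus: "a \<in> X \<Longrightarrow> lb a \<Longrightarrow> h a = h (a - 1) + 1"
  using h_step[of a] by (simp add: sg_def)
lemma h_minus: "a \<in> X \<Longrightarrow> \<not> lb a \<Longrightarrow> h a = h (a - 1) - 1"
  using h_step[of a] by (simp add: sg_def)
lemma h_notX: "a \<notin> X \<Longrightarrow> h a = h (a - 1)"
  using h_step[of a] by simp

definition good :: "int \<Rightarrow> int \<Rightarrow> bool" where
  "good a b \<longleftrightarrow> a \<in> X \<and> lb a \<and> a < b \<and> h b < h a \<and> (\<forall>t. a \<le> t \<and> t < b \<longrightarrow> h a \<le> h t)"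

lemma G1: assumes "good a b" shows "b \<in> X" "\<not> lb b" "h b = h a - 1" "h (b - 1) = h a"
proof -
  have ab: "a < b" "h b < h a" "\<forall>t. a \<le> t \<and> t < b \<longrightarrow> h a \<le> h t" using assms by (auto simp: good_def)
  have hb1: "h a \<le> h (b - 1)" using ab by simp
  have bX: "b \<in> X" using h_notX[of b] ab hb1 by (cases "b \<in> X") auto
  moreover have nl: "\<not> lb b" using h_plus[of b] bX ab hb1 by (cases "lb b") auto
  moreover have hb: "h b = h (b - 1) - 1" using h_minus[of b] bX nl by simp
  ultimately show "b \<in> X" "\<not> lb b" "h b = h a - 1" "h (b - 1) = h a" using ab(2) hb1 by linarith+
qed

lemma G2: assumes "good a b" "good a b'" shows "b = b'"
proof (rule ccontr)
  assume "b \<noteq> b'"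
  then consider "b < b'" | "b' < b" by linarith
  then show False
  proof cases
    case 1
    have "h a \<le> h b" using assms(2) 1 assms(1) unfolding good_def by auto
    then show False using assms(1) unfolding good_def by simp
  next
    case 2
    have "h a \<le> h b'" using assms(1) 2 assms(2) unfolding good_def by auto
    then show False using assms(2) unfolding good_def by simp
  qed
qed

lemma G3: assumes "a \<in> X" "lb a" shows "\<exists>b. good a b"
proof -
  define S where "S = {t. a < t \<and> t \<le> 2 * int n \<and> h t < h a}"
  have ha: "h a \<ge> 1" using h_plus[OF assms] h_nonneg[of "a - 1"] by simp
  have a2: "a < 2 * int n"
  proof -
    have "a \<le> 2 * int n" using assms(1) by (simp add: Pts_iff)
    moreover have "a \<noteq> 2 * int n"
    proof
      assume "a = 2 * int n"
      moreover have "n \<ge> 1" using assms(1) by (auto simp: Pts_iff)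
      ultimately show False using assms(2) by (simp add: lab_def)
    qed
    ultimately show ?thesis by simp
  qed
  have "2 * int n \<in> S" unfolding S_def using a2 ha h_total[of "2 * int n"] by simp
  moreover have finS: "finite S" unfolding S_def by (rule finite_subset[of _ "{a..2 * int n}"]) auto
  ultimately have mS: "Min S \<in> S" "\<And>t. t \<in> S \<Longrightarrow> Min S \<le> t" using Min_in by auto
  have "good a (Min S)" unfolding good_def
  proof (intro conjI allI impI)
    show "a \<in> X" "lb a" by (fact assms)+
    show "a < Min S" "h (Min S) < h a" using mS(1) by (auto simp: S_def)
  next
    fix t assume t: "a \<le> t \<and> t < Min S"
    show "h a \<le> h t"
    proof (rule ccontr)
      assume "\<not> h a \<le> h t"
      then have "t \<noteq> a" by auto
      then have "t \<in> S" using t \<open>\<not> h a \<le> h t\<close> mS(1) unfolding S_def by auto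
      then show False using mS(2) t by force
    qed
  qed
  then show ?thesis by blast
qed

lemma level: assumes "1 \<le> v" "- 2 * int n - 1 \<le> u" "v \<le> h u"
  shows "\<exists>x. x \<le> u \<and> x \<in> X \<and> lb x \<and> h x = v \<and> (\<forall>t. x \<le> t \<and> t \<le> u \<longrightarrow> v \<le> h t)"
proof -
  define S where "S = {t. - 2 * int n - 1 \<le> t \<and> t \<le> u \<and> h t < v}"
  have "- 2 * int n - 1 \<in> S" unfolding S_def using assms h_low[of "- 2 * int n - 1"] by simp
  moreover have finS: "finite S" unfolding S_def by (rule finite_subset[of _ "{- 2 * int n - 1..u}"]) auto
  ultimately have mS: "Max S \<in> S" "\<And>t. t \<in> S \<Longrightarrow> t \<le> Max S" using Max_in by auto
  define x where "x = Max S + 1"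
  have m1: "Max S \<le> u" "h (Max S) < v" using mS(1) unfolding S_def by auto
  then have "Max S \<noteq> u" using assms(3) by auto
  then have xu: "x \<le> u" using m1 unfolding x_def by simp
  have above: "v \<le> h t" if "x \<le> t" "t \<le> u" for t
  proof (rule ccontr)
    assume "\<not> v \<le> h t"
    then have "t \<in> S" using that mS(1) unfolding S_def x_def by auto
    then show False using mS(2) that unfolding x_def by force
  qed
  have hx: "v \<le> h x" using above xu by simp
  have hx0: "h (x - 1) < v" using mS(1) unfolding S_def x_def by simp
  have xX: "x \<in> X" using h_notX[of x] hx hx0 by (cases "x \<in> X") auto
  have lx: "lb x" using h_minus[of x] xX hx hx0 by (cases "lb x") auto
  have "h x = v" using h_plus[OF xX lx] hx hx0 by simp
  then show ?thesis using xu xX lx above by blast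
qed

lemma G4: assumes "b \<in> X" "\<not> lb b" shows "\<exists>a. good a b"
proof -
  have hb: "h (b - 1) = h b + 1" using h_minus[OF assms] by simp
  have "1 \<le> h (b - 1)" using hb h_nonneg[of b] by simp
  moreover have "- 2 * int n - 1 \<le> b - 1" using assms(1) by (simp add: Pts_iff)
  ultimately obtain x where x: "x \<le> b - 1" "x \<in> X" "lb x" "h x = h (b - 1)"
    "\<forall>t. x \<le> t \<and> t \<le> b - 1 \<longrightarrow> h (b - 1) \<le> h t"
    using level[of "h (b - 1)" "b - 1"] by blast
  have "good x b" unfolding good_def using x hb by auto
  then show ?thesis by blast
qed

lemma G5: assumes "good a b" "good a' b" shows "a = a'"
proof (rule ccontr)
  assume ne: "a \<noteq> a'"
  have e: "h a = h a'" using G1(3)[OF assms(1)] G1(3)[OF assms(2)] by simp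
  have gen: False if "good x b" "good x' b" "x < x'" "h x = h x'" for x x'
  proof -
    have "h x \<le> h (x' - 1)" using that unfolding good_def by auto
    moreover have "h x' = h (x' - 1) + 1" using h_plus that(2) unfolding good_def by auto
    ultimately show False using that(4) by simp
  qed
  show False using ne gen[OF assms] gen[OF assms(2,1)] e by linarith
qed

lemma G6: assumes "good a b" "good c d" "a < c" "c < b" "b < d" shows False
proof -
  have "h a \<le> h c" using assms(1,3,4) unfolding good_def by auto
  moreover have "h c \<le> h b" using assms(2,4,5) unfolding good_def by auto
  ultimately show False using assms(1) unfolding good_def by simp
qed

lemma G7: assumes "good a b" shows "good (- b) (- a)"
proof -
  have a: "a \<in> X" "lb a" "a < b" and all: "\<forall>t. a \<le> t \<and> t < b \<longrightarrow> h a \<le> h t" using assms by (auto simp: good_def)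
  have b: "b \<in> X" "\<not> lb b" "h b = h a - 1" "h (b - 1) = h a" using G1[OF assms] by auto
  have h1: "h (- b) = h a" using h_sym[of "- b"] b(4) by simp
  have h2: "h (- a) = h a - 1" using h_sym[of "- a"] h_plus[OF a(1,2)] by simp
  show ?thesis unfolding good_def
  proof (intro conjI allI impI)
    show "- b \<in> X" using Pts_sym b(1) .
    show "lb (- b)" using lab_neg[OF b(1)] b(2) by simp
    show "- b < - a" using a by simp
    show "h (- a) < h (- b)" using h1 h2 by simp
  next
    fix t assume t: "- b \<le> t \<and> t < - a"
    then have "h a \<le> h (- t - 1)" using all by auto
    then show "h (- b) \<le> h t" using h_sym[of t] h1 by simp
  qed
qed

definition Gm :: "(int \<times> int) set" where "Gm = {(a, b). good a b}"

lemma Gm_nc: "nc_matching n al Gm"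
  unfolding nc_matching_def
proof (intro conjI ballI)
  fix e assume "e \<in> Gm"
  then obtain a b where e: "e = (a, b)" "good a b" by (auto simp: Gm_def)
  then show "case e of (x, y) \<Rightarrow> x \<in> X \<and> y \<in> X \<and> x < y \<and> lb x \<and> \<not> lb y"
    using G1[OF e(2)] by (auto simp: good_def)
next
  fix p assume p: "p \<in> X"
  show "\<exists>!e. e \<in> Gm \<and> (p = fst e \<or> p = snd e)"
  proof (cases "lb p")
    case True
    obtain b where b: "good p b" using G3[OF p True] by blast
    show ?thesis
    proof (rule ex1I[of _ "(p, b)"])
      show "(p, b) \<in> Gm \<and> (p = fst (p, b) \<or> p = snd (p, b))" using b by (simp add: Gm_def)
    next
      fix e assume e: "e \<in> Gm \<and> (p = fst e \<or> p = snd e)"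
      then obtain x y where xy: "e = (x, y)" "good x y" by (auto simp: Gm_def)
      then show "e = (p, b)" using e G1(2)[OF xy(2)] True G2[OF b] by auto
    qed
  next
    case False
    obtain a where a: "good a p" using G4[OF p False] by blast
    show ?thesis
    proof (rule ex1I[of _ "(a, p)"])
      show "(a, p) \<in> Gm \<and> (p = fst (a, p) \<or> p = snd (a, p))" using a by (simp add: Gm_def)
    next
      fix e assume e: "e \<in> Gm \<and> (p = fst e \<or> p = snd e)"
      then obtain x y where xy: "e = (x, y)" "good x y" by (auto simp: Gm_def)
      then show "e = (a, p)" using e False G5[OF a] by (auto simp: good_def)
    qed
  qed
next
  fix e1 assume "e1 \<in> Gm"
  then show "case e1 of (a, b) \<Rightarrow> \<forall>(c, d) \<in> Gm. \<not> (a < c \<and> c < b \<and> b < d)"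
    using G6 by (auto simp: Gm_def)
qed


lemma sum_sg: assumes "finite S"
  shows "(\<Sum>j\<in>S. sg j) = int (card {j\<in>S. lb j}) - int (card {j\<in>S. \<not> lb j})"
proof -
  have d: "{j\<in>S. lb j} \<inter> {j\<in>S. \<not> lb j} = {}" by auto
  have u: "S = {j\<in>S. lb j} \<union> {j\<in>S. \<not> lb j}" by auto
  have "(\<Sum>j\<in>S. sg j) = (\<Sum>j\<in>{j\<in>S. lb j}. sg j) + (\<Sum>j\<in>{j\<in>S. \<not> lb j}. sg j)"
    by (subst u, rule sum.union_disjoint) (use assms d in auto)
  also have "(\<Sum>j\<in>{j\<in>S. lb j}. sg j) = (\<Sum>j\<in>{j\<in>S. lb j}. 1)" by (rule sum.cong) (auto simp: sg_def)
  also have "(\<Sum>j\<in>{j\<in>S. \<not> lb j}. sg j) = (\<Sum>j\<in>{j\<in>S. \<not> lb j}. -1)" by (rule sum.cong) (auto simp: sg_def)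
  finally show ?thesis by simp
qed

lemma U1: assumes M: "nc_matching n al M" and ab: "(a, b) \<in> M" shows "good a b"
proof -
  have M1: "\<And>e. e \<in> M \<Longrightarrow> fst e \<in> X \<and> snd e \<in> X \<and> fst e < snd e \<and> lb (fst e) \<and> \<not> lb (snd e)"
    using M unfolding nc_matching_def by (auto split: prod.splits)
  have M2': "\<forall>p\<in>X. \<exists>!e. e \<in> M \<and> (p = fst e \<or> p = snd e)"
    using M unfolding nc_matching_def by (rule conjunct1[OF conjunct2])
  have M2: "\<And>p. p \<in> X \<Longrightarrow> \<exists>!e. e \<in> M \<and> (p = fst e \<or> p = snd e)" using M2' by blast
  have M3: "\<And>a b c d. (a, b) \<in> M \<Longrightarrow> (c, d) \<in> M \<Longrightarrow> \<not> (a < c \<and> c < b \<and> b < d)"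
    using M unfolding nc_matching_def by fastforce
  have uq: "e = f" if "p \<in> X" "e \<in> M" "p = fst e \<or> p = snd e" "f \<in> M" "p = fst f \<or> p = snd f" for p e f
    using M2[OF that(1)] that by blast
  have "\<forall>p\<in>X. \<exists>e. e \<in> M \<and> (p = fst e \<or> p = snd e)" using M2 by blast
  from bchoice[OF this] obtain ep where ep: "\<And>p. p \<in> X \<Longrightarrow> ep p \<in> M \<and> (p = fst (ep p) \<or> p = snd (ep p))" by blast
  have abp: "a \<in> X" "b \<in> X" "a < b" "lb a" "\<not> lb b" using M1[OF ab] by auto
  have epneg: "j = snd (ep j)" if "j \<in> X" "\<not> lb j" for j using ep[OF that(1)] M1[of "ep j"] that(2) by auto
  have eppos: "j = fst (ep j)" if "j \<in> X" "lb j" for j using ep[OF that(1)] M1[of "ep j"] that(2) by auto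
  have epa: "ep a = (a, b)" using uq[OF abp(1) _ _ ab] ep[OF abp(1)] by simp
  have epb: "ep b = (a, b)" using uq[OF abp(2) _ _ ab] ep[OF abp(2)] by simp
  have part1: "h a \<le> h t" if t: "a \<le> t" "t < b" for t
  proof -
    define S where "S = {j\<in>X. a < j \<and> j \<le> t}"
    have finS: "finite S" unfolding S_def using Pts_fin by simp
    have "card {j\<in>S. \<not> lb j} \<le> card {j\<in>S. lb j}"
    proof (rule card_inj_on_le[of "\<lambda>j. fst (ep j)"])
      show "inj_on (\<lambda>j. fst (ep j)) {j\<in>S. \<not> lb j}"
      proof (rule inj_onI)
        fix j1 j2 assume j: "j1 \<in> {j\<in>S. \<not> lb j}" "j2 \<in> {j\<in>S. \<not> lb j}" "fst (ep j1) = fst (ep j2)"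
        have j1X: "j1 \<in> X" "j2 \<in> X" using j by (auto simp: S_def)
        have "fst (ep j1) \<in> X" using M1 ep[OF j1X(1)] by blast
        then have "ep j1 = ep j2" using uq[of "fst (ep j1)" "ep j1" "ep j2"] ep[OF j1X(1)] ep[OF j1X(2)] j(3) by auto
        moreover have "j1 = snd (ep j1)" "j2 = snd (ep j2)" using epneg j j1X by auto
        ultimately show "j1 = j2" by simp
      qed
    next
      show "(\<lambda>j. fst (ep j)) ` {j\<in>S. \<not> lb j} \<subseteq> {j\<in>S. lb j}"
      proof
        fix i assume "i \<in> (\<lambda>j. fst (ep j)) ` {j\<in>S. \<not> lb j}"
        then obtain j where j: "j \<in> S" "\<not> lb j" "i = fst (ep j)" by blast
        have jX: "j \<in> X" "a < j" "j \<le> t" using j(1) by (auto simp: S_def)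
        have js: "j = snd (ep j)" using epneg[OF jX(1) j(2)] .
        have em: "ep j \<in> M" using ep[OF jX(1)] by blast
        have iprop: "i \<in> X" "lb i" "i < j" using M1[OF em] js j(3) by auto
        have ij: "(i, j) \<in> M" using em js j(3) by (metis prod.collapse)
        have "i \<noteq> a"
        proof
          assume "i = a"
          then have "ep j = (a, b)" using uq[OF abp(1) em _ ab] j(3) by simp
          then show False using js jX t by simp
        qed
        moreover have "\<not> i < a" using M3[OF ij ab] jX t by auto
        ultimately show "i \<in> {j\<in>S. lb j}" using iprop jX by (auto simp: S_def)
      qed
    qed (simp add: finS)
    then have "(\<Sum>j\<in>S. sg j) \<ge> 0" using sum_sg[OF finS] by simp
    then show ?thesis using h_split[OF t(1)] unfolding S_def by simp
  qed
  have part2: "h b < h a"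
  proof -
    define S where "S = {j\<in>X. a < j \<and> j \<le> b - 1}"
    have finS: "finite S" unfolding S_def using Pts_fin by simp
    have "card {j\<in>S. lb j} \<le> card {j\<in>S. \<not> lb j}"
    proof (rule card_inj_on_le[of "\<lambda>j. snd (ep j)"])
      show "inj_on (\<lambda>j. snd (ep j)) {j\<in>S. lb j}"
      proof (rule inj_onI)
        fix j1 j2 assume j: "j1 \<in> {j\<in>S. lb j}" "j2 \<in> {j\<in>S. lb j}" "snd (ep j1) = snd (ep j2)"
        have j1X: "j1 \<in> X" "j2 \<in> X" using j by (auto simp: S_def)
        have "snd (ep j1) \<in> X" using M1 ep[OF j1X(1)] by blast
        then have "ep j1 = ep j2" using uq[of "snd (ep j1)" "ep j1" "ep j2"] ep[OF j1X(1)] ep[OF j1X(2)] j(3) by auto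
        moreover have "j1 = fst (ep j1)" "j2 = fst (ep j2)" using eppos j j1X by auto
        ultimately show "j1 = j2" by simp
      qed
    next
      show "(\<lambda>j. snd (ep j)) ` {j\<in>S. lb j} \<subseteq> {j\<in>S. \<not> lb j}"
      proof
        fix k assume "k \<in> (\<lambda>j. snd (ep j)) ` {j\<in>S. lb j}"
        then obtain j where j: "j \<in> S" "lb j" "k = snd (ep j)" by blast
        have jX: "j \<in> X" "a < j" "j \<le> b - 1" using j(1) by (auto simp: S_def)
        have js: "j = fst (ep j)" using eppos[OF jX(1) j(2)] .
        have em: "ep j \<in> M" using ep[OF jX(1)] by blast
        have kprop: "k \<in> X" "\<not> lb k" "j < k" using M1[OF em] js j(3) by auto
        have jk: "(j, k) \<in> M" using em js j(3) by (metis prod.collapse)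
        have "k \<noteq> b"
        proof
          assume "k = b"
          then have "ep j = (a, b)" using uq[OF abp(2) em _ ab] j(3) by simp
          then show False using js jX by simp
        qed
        moreover have "\<not> b < k" using M3[OF ab jk] jX by auto
        ultimately show "k \<in> {j\<in>S. \<not> lb j}" using kprop jX by (auto simp: S_def)
      qed
    qed (simp add: finS)
    then have "(\<Sum>j\<in>S. sg j) \<le> 0" using sum_sg[OF finS] by simp
    moreover have "h (b - 1) = h a + (\<Sum>j\<in>S. sg j)" unfolding S_def by (rule h_split) (use abp in simp)
    moreover have "h b = h (b - 1) - 1" using h_minus[OF abp(2) abp(5)] .
    ultimately show ?thesis by simp
  qed
  show ?thesis unfolding good_def using abp part1 part2 by auto
qed

lemma M_eq: assumes M: "nc_matching n al M" shows "M = Gm"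
proof
  show "M \<subseteq> Gm" using U1[OF M] by (auto simp: Gm_def)
  show "Gm \<subseteq> M"
  proof
    fix e assume "e \<in> Gm"
    then obtain a b where ab: "e = (a, b)" "good a b" by (auto simp: Gm_def)
    have aX: "a \<in> X" "lb a" using ab(2) by (auto simp: good_def)
    have M1: "\<And>e. e \<in> M \<Longrightarrow> fst e \<in> X \<and> snd e \<in> X \<and> fst e < snd e \<and> lb (fst e) \<and> \<not> lb (snd e)"
      using M unfolding nc_matching_def by (auto split: prod.splits)
    have M2: "\<forall>p\<in>X. \<exists>!e. e \<in> M \<and> (p = fst e \<or> p = snd e)"
      using M unfolding nc_matching_def by (rule conjunct1[OF conjunct2])
    obtain f where f: "f \<in> M" "a = fst f \<or> a = snd f" using M2 aX(1) by blast
    have "a = fst f" using f M1[OF f(1)] aX(2) by auto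
    then have f2: "f = (a, snd f)" by (metis prod.collapse)
    then have "good a (snd f)" using U1[OF M, of a "snd f"] f(1) by simp
    then have "snd f = b" using G2[OF ab(2)] by simp
    then show "e \<in> M" using f2 f(1) ab(1) by simp
  qed
qed

lemma matching_eq: "matching n al = Gm"
proof -
  have "(THE M. nc_matching n al M) = Gm"
  proof (rule the_equality)
    show "nc_matching n al Gm" by (rule Gm_nc)
  next
    fix M assume "nc_matching n al M" then show "M = Gm" by (rule M_eq)
  qed
  then show ?thesis by (simp only: matching_def)
qed


lemma Gm_uniq: assumes "p \<in> X" "e \<in> Gm" "p = fst e \<or> p = snd e" "e' \<in> Gm" "p = fst e' \<or> p = snd e'"
  shows "e = e'"
proof -
  have "\<forall>p\<in>X. \<exists>!e. e \<in> Gm \<and> (p = fst e \<or> p = snd e)"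
    using Gm_nc unfolding nc_matching_def by (rule conjunct1[OF conjunct2])
  then show ?thesis using assms by blast
qed

lemma Gm_ex: assumes "p \<in> X" shows "\<exists>e. e \<in> Gm \<and> (p = fst e \<or> p = snd e)"
proof -
  have "\<forall>p\<in>X. \<exists>!e. e \<in> Gm \<and> (p = fst e \<or> p = snd e)"
    using Gm_nc unfolding nc_matching_def by (rule conjunct1[OF conjunct2])
  then show ?thesis using assms by blast
qed

lemma GS: assumes "x < 0" "x \<in> X" "lb x" "\<forall>t. x \<le> t \<and> t \<le> -1 \<longrightarrow> h x \<le> h t" shows "good x (- x)"
  unfolding good_def
proof (intro conjI allI impI)
  show "x \<in> X" "lb x" "x < - x" using assms by auto
  have "h (- x) = h (x - 1)" using h_sym[of "- x"] by simp
  then show "h (- x) < h x" using h_plus[OF assms(2,3)] by simp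
next
  fix t assume t: "x \<le> t \<and> t < - x"
  show "h x \<le> h t"
  proof (cases "t \<le> -1")
    case True then show ?thesis using assms(4) t by simp
  next
    case False
    then have "h x \<le> h (- t - 1)" using assms(4) t by simp
    then show ?thesis using h_sym[of t] by simp
  qed
qed

lemma cross_sym: assumes "good x y" "x < 0" "0 < y" shows "y = - x"
proof -
  have "good x (- x)"
    by (rule GS) (use assms in \<open>auto simp: good_def\<close>)
  then show ?thesis using G2[OF assms(1)] by simp
qed

definition Y :: "int set" where "Y = snd ` crossing_arcs Gm"

lemma Y_iff: "y \<in> Y \<longleftrightarrow> 0 < y \<and> good (- y) y"
proof
  assume "y \<in> Y"
  then obtain a where a: "(a, y) \<in> Gm" "a < 0" "0 < y" by (auto simp: Y_def crossing_arcs_def)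
  then have g: "good a y" by (simp add: Gm_def)
  then have "y = - a" by (rule cross_sym[OF _ a(2,3)])
  then have "a = - y" by simp
  then show "0 < y \<and> good (- y) y" using g a(3) by simp
next
  assume "0 < y \<and> good (- y) y"
  then have "(- y, y) \<in> crossing_arcs Gm" by (simp add: crossing_arcs_def Gm_def)
  then show "y \<in> Y" unfolding Y_def by (rule image_eqI[where x = "(- y, y)", rotated]) simp
qed

lemma Y_X: assumes "y \<in> Y" shows "y \<in> X"
proof -
  have "good (- y) y" using assms Y_iff by simp
  then show ?thesis by (rule G1(1))
qed
lemma Y_fin: "finite Y" by (rule finite_subset[OF _ Pts_fin]) (use Y_X in blast)

lemma card_split: assumes "finite S" shows "card {j\<in>S. lb j} + card {j\<in>S. \<not> lb j} = card S"
proof -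
  have "S = {j\<in>S. lb j} \<union> {j\<in>S. \<not> lb j}" by auto
  moreover have "card ({j\<in>S. lb j} \<union> {j\<in>S. \<not> lb j}) = card {j\<in>S. lb j} + card {j\<in>S. \<not> lb j}"
    by (rule card_Un_disjoint) (use assms in auto)
  ultimately show ?thesis by simp
qed

lemma h_m1_even: "even (h (-1))"
proof -
  define S where "S = {j \<in> X. j \<le> -1}"
  have S: "S = {- 2 * int n .. -1}" unfolding S_def by (auto simp: Pts_iff)
  have cS: "card S = 2 * n" unfolding S by simp
  have finS: "finite S" unfolding S by simp
  have "h (-1) = int (card {j\<in>S. lb j}) - int (card {j\<in>S. \<not> lb j})"
    unfolding h_def S_def[symmetric] by (rule sum_sg[OF finS])
  moreover have "card {j\<in>S. lb j} + card {j\<in>S. \<not> lb j} = 2 * n" using card_split[OF finS] cS by simp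
  ultimately have "h (-1) = 2 * int n - 2 * int (card {j\<in>S. \<not> lb j})" by linarith
  then show ?thesis by simp
qed

lemma card_Y: "card Y = nat (h (-1))"
proof -
  have "bij_betw (\<lambda>y. h (- y)) Y {1 .. h (-1)}"
    unfolding bij_betw_def
  proof (intro conjI)
    show "inj_on (\<lambda>y. h (- y)) Y"
    proof (rule inj_onI)
      fix y1 y2 assume y: "y1 \<in> Y" "y2 \<in> Y" "h (- y1) = h (- y2)"
      have gen: False if "y1 \<in> Y" "y2 \<in> Y" "h (- y1) = h (- y2)" "y2 < y1" for y1 y2
      proof -
        have g1: "good (- y1) y1" "0 < y1" using that(1) Y_iff by auto
        have g2: "good (- y2) y2" "0 < y2" using that(2) Y_iff by auto
        have "h (- y1) \<le> h (- y2 - 1)" using g1 g2 that(4) unfolding good_def by auto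
        moreover have "h (- y2) = h (- y2 - 1) + 1" using g2 h_plus unfolding good_def by auto
        ultimately show False using that(3) by simp
      qed
      show "y1 = y2"
      proof (rule ccontr)
        assume "y1 \<noteq> y2"
        then consider "y2 < y1" | "y1 < y2" by linarith
        then show False
        proof cases
          case 1 then show False using gen[OF y] by blast
        next
          case 2 then show False using gen[OF y(2,1) y(3)[symmetric]] by blast
        qed
      qed
    qed
    show "(\<lambda>y. h (- y)) ` Y = {1 .. h (-1)}"
    proof
      show "(\<lambda>y. h (- y)) ` Y \<subseteq> {1 .. h (-1)}"
      proof
        fix v assume "v \<in> (\<lambda>y. h (- y)) ` Y"
        then obtain y where y: "y \<in> Y" "v = h (- y)" by blast
        have g: "good (- y) y" "0 < y" using y(1) Y_iff by auto
        have "h (- y) = h (- y - 1) + 1" using g h_plus unfolding good_def by auto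
        then have "1 \<le> h (- y)" using h_nonneg[of "- y - 1"] by simp
        moreover have "h (- y) \<le> h (-1)" using g unfolding good_def by auto
        ultimately show "v \<in> {1 .. h (-1)}" using y by simp
      qed
      show "{1 .. h (-1)} \<subseteq> (\<lambda>y. h (- y)) ` Y"
      proof
        fix v assume v: "v \<in> {1 .. h (-1)}"
        obtain x where x: "x \<le> -1" "x \<in> X" "lb x" "h x = v" "\<forall>t. x \<le> t \<and> t \<le> -1 \<longrightarrow> v \<le> h t"
          using level[of v "-1"] v by auto
        have "good x (- x)" by (rule GS) (use x in auto)
        then have "- x \<in> Y" using Y_iff x(1) by simp
        moreover have "v = h (- (- x))" using x by simp
        ultimately show "v \<in> (\<lambda>y. h (- y)) ` Y" by blast
      qed
    qed
  qed
  then have "card Y = card {1 .. h (-1)}" by (rule bij_betw_same_card)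
  then show ?thesis by simp
qed

lemma Y_even: "even (card Y)"
proof -
  have "h (-1) \<ge> 0" by (rule h_nonneg)
  then show ?thesis using card_Y h_m1_even by (metis even_nat_iff)
qed


abbreviation "ys \<equiv> ys_of n al"
lemma ys_eq: "ys = sorted_list_of_set Y" unfolding ys_of_def Y_def matching_eq ..
lemma ys_set: "set ys = Y" using ys_eq Y_fin by simp
lemma ys_dist: "distinct ys" using ys_eq by simp
lemma ys_len: "length ys = card Y" using ys_eq by simp
lemma K_even: "even (length ys)" using ys_len Y_even by simp

definition ff :: "nat \<Rightarrow> nat" where "ff i = (if even i then Suc i else i - 1)"

lemma ff_lt: assumes "i < length ys" shows "ff i < length ys"
proof (cases "even i")
  case True
  have "Suc i \<noteq> length ys"
  proof
    assume "Suc i = length ys"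
    then have "even (Suc i)" using K_even by simp
    then show False using True by simp
  qed
  then show ?thesis using True assms by (simp add: ff_def)
next
  case False then show ?thesis using assms by (simp add: ff_def)
qed
lemma ff_ff: "ff (ff i) = i" by (cases "even i") (auto simp: ff_def elim: oddE)
lemma ff_ne: "ff i \<noteq> i" by (cases "even i") (auto simp: ff_def elim: oddE)

lemma ys_pos: assumes "i < length ys" shows "0 < ys ! i" "ys ! i \<in> Y" "ys ! i \<in> X"
proof -
  show "ys ! i \<in> Y" using assms ys_set nth_mem by blast
  then show "0 < ys ! i" "ys ! i \<in> X" using Y_iff Y_X by auto
qed

lemma ys_inj: "i < length ys \<Longrightarrow> k < length ys \<Longrightarrow> ys ! i = ys ! k \<Longrightarrow> i = k"
  using ys_dist nth_eq_iff_index_eq by blast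

definition LA :: "(int \<times> int) set" where "LA = {(- (ys ! (ff i)), ys ! i) | i. i < length ys}"

lemma LA_mem: "e \<in> LA \<longleftrightarrow> (\<exists>i < length ys. e = (- (ys ! (ff i)), ys ! i))"
  unfolding LA_def by blast

lemma LA_eq: "\<Union> (linked_pairs n al) = LA"
proof
  show "\<Union> (linked_pairs n al) \<subseteq> LA"
  proof
    fix x assume "x \<in> \<Union> (linked_pairs n al)"
    then obtain j where j: "j < length ys div 2"
      "x \<in> {(- (ys ! (2 * j + 1)), ys ! (2 * j)), (- (ys ! (2 * j)), ys ! (2 * j + 1))}"
      unfolding linked_pairs_def Let_def by blast
    have j2: "2 * j < length ys" "2 * j + 1 < length ys" using j(1) by auto
    have f1: "ff (2 * j) = 2 * j + 1" "ff (2 * j + 1) = 2 * j" by (auto simp: ff_def)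
    from j(2) show "x \<in> LA"
    proof
      assume "x = (- (ys ! (2 * j + 1)), ys ! (2 * j))"
      then show "x \<in> LA" unfolding LA_mem using j2 f1 by (intro exI[of _ "2 * j"]) simp
    next
      assume "x \<in> {(- (ys ! (2 * j)), ys ! (2 * j + 1))}"
      then show "x \<in> LA" unfolding LA_mem using j2 f1 by (intro exI[of _ "2 * j + 1"]) simp
    qed
  qed
  show "LA \<subseteq> \<Union> (linked_pairs n al)"
  proof
    fix x assume "x \<in> LA"
    then obtain i where i: "i < length ys" "x = (- (ys ! (ff i)), ys ! i)" unfolding LA_def by blast
    define j where "j = i div 2"
    obtain m where m: "length ys = 2 * m" using K_even by (elim evenE)
    have j: "j < length ys div 2" using i(1) unfolding j_def m by (simp add: less_mult_imp_div_less mult.commute)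
    have "x \<in> {(- (ys ! (2 * j + 1)), ys ! (2 * j)), (- (ys ! (2 * j)), ys ! (2 * j + 1))}"
    proof (cases "even i")
      case True
      then have "i = 2 * j" "ff i = 2 * j + 1" unfolding j_def ff_def by auto
      then show ?thesis using i by simp
    next
      case False
      then have "i = 2 * j + 1" "ff i = 2 * j" unfolding j_def ff_def by (auto elim: oddE)
      then show ?thesis using i by simp
    qed
    then show "x \<in> \<Union> (linked_pairs n al)" unfolding linked_pairs_def Let_def using j by blast
  qed
qed

abbreviation "NC \<equiv> Gm - crossing_arcs Gm"

lemma cup_eq: "cup_arcs n al = NC \<union> LA"
  unfolding cup_arcs_def matching_eq LA_eq ..

lemma crs_form: assumes "e \<in> crossing_arcs Gm" shows "e = (- snd e, snd e)" "snd e \<in> Y"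
proof -
  have g: "good (fst e) (snd e)" "fst e < 0" "0 < snd e" using assms
    by (auto simp: crossing_arcs_def Gm_def split: prod.splits)
  have "snd e = - fst e" by (rule cross_sym[OF g])
  then show "e = (- snd e, snd e)" by (simp add: prod_eq_iff)
  show "snd e \<in> Y" using assms by (simp add: Y_def)
qed

lemma Y_arc: assumes "y \<in> Y" shows "(- y, y) \<in> Gm" "(- y, y) \<in> crossing_arcs Gm"
  using assms Y_iff by (auto simp: Gm_def crossing_arcs_def)

lemma NC_ends: assumes "e \<in> NC" "p = fst e \<or> p = snd e" shows "p \<notin> Y" "- p \<notin> Y"
proof -
  have pX: "p \<in> X" using assms G1(1)[of "fst e" "snd e"] by (auto simp: Gm_def good_def split: prod.splits)
  show "p \<notin> Y"
  proof
    assume "p \<in> Y"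
    then have "e = (- p, p)" using Gm_uniq[OF pX _ assms(2) Y_arc(1)[OF \<open>p \<in> Y\<close>]] assms(1) by simp
    then show False using assms(1) Y_arc(2)[OF \<open>p \<in> Y\<close>] by simp
  qed
  show "- p \<notin> Y"
  proof
    assume "- p \<in> Y"
    then have "e = (- (- p), - p)" using Gm_uniq[OF pX _ assms(2) Y_arc(1)[OF \<open>- p \<in> Y\<close>]] assms(1) by simp
    then show False using assms(1) Y_arc(2)[OF \<open>- p \<in> Y\<close>] by simp
  qed
qed


lemma Gm_good: "e \<in> Gm \<Longrightarrow> good (fst e) (snd e)" by (auto simp: Gm_def)

lemma pm: "pmatch X (cup_arcs n al)"
proof
  show "finite X" by (rule Pts_fin)
  show "0 \<notin> X" by (rule Pts_0)
  show "- x \<in> X" if "x \<in> X" for x using Pts_sym that .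
next
  fix e assume "e \<in> cup_arcs n al"
  then consider "e \<in> NC" | "e \<in> LA" unfolding cup_eq by blast
  then show "fst e \<in> X \<and> snd e \<in> X \<and> fst e < snd e"
  proof cases
    case 1
    then have g: "good (fst e) (snd e)" using Gm_good by blast
    then show ?thesis using G1(1)[OF g] by (auto simp: good_def)
  next
    case 2
    then obtain i where i: "i < length ys" "e = (- (ys ! (ff i)), ys ! i)" by (auto simp: LA_mem)
    then show ?thesis using ys_pos[OF i(1)] ys_pos[OF ff_lt[OF i(1)]] Pts_sym by auto
  qed
next
  fix e assume "e \<in> cup_arcs n al"
  then consider "e \<in> NC" | "e \<in> LA" unfolding cup_eq by blast
  then show "sig e \<in> cup_arcs n al"
  proof cases
    case 1
    then have g: "good (fst e) (snd e)" using Gm_good by blast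
    have "good (- snd e) (- fst e)" using G7[OF g] .
    then have "sig e \<in> Gm" by (simp add: sig_def Gm_def)
    moreover have "sig e \<notin> crossing_arcs Gm" using 1 by (auto simp: sig_def crossing_arcs_def)
    ultimately show ?thesis unfolding cup_eq by blast
  next
    case 2
    then obtain i where i: "i < length ys" "e = (- (ys ! (ff i)), ys ! i)" by (auto simp: LA_mem)
    have "sig e = (- (ys ! (ff (ff i))), ys ! (ff i))" using i(2) by (simp add: sig_def ff_ff)
    then have "sig e \<in> LA" using ff_lt[OF i(1)] by (auto simp: LA_mem)
    then show ?thesis unfolding cup_eq by blast
  qed
next
  fix e assume "e \<in> cup_arcs n al"
  then consider "e \<in> NC" | "e \<in> LA" unfolding cup_eq by blast
  then show "fst e \<noteq> - snd e"
  proof cases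
    case 1
    then have g: "good (fst e) (snd e)" using Gm_good by blast
    show ?thesis
    proof
      assume "fst e = - snd e"
      moreover have "fst e < snd e" using g by (simp add: good_def)
      ultimately have "e \<in> crossing_arcs Gm" using 1 by (auto simp: crossing_arcs_def)
      then show False using 1 by simp
    qed
  next
    case 2
    then obtain i where i: "i < length ys" "e = (- (ys ! (ff i)), ys ! i)" by (auto simp: LA_mem)
    show ?thesis using ys_inj[OF ff_lt[OF i(1)] i(1)] ff_ne i(2) by auto
  qed
next
  fix p assume pX: "p \<in> X"
  show "\<exists>!e. e \<in> cup_arcs n al \<and> (p = fst e \<or> p = snd e)"
  proof (cases "p \<in> Y")
    case True
    then have "p \<in> set ys" using ys_set by simp
    then obtain i where i: "i < length ys" "ys ! i = p" by (auto simp: in_set_conv_nth)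
    show ?thesis
    proof (rule ex1I[of _ "(- (ys ! (ff i)), ys ! i)"])
      show "(- (ys ! (ff i)), ys ! i) \<in> cup_arcs n al \<and> (p = fst (- (ys ! (ff i)), ys ! i) \<or> p = snd (- (ys ! (ff i)), ys ! i))"
        unfolding cup_eq using i by (auto simp: LA_mem)
    next
      fix e assume e: "e \<in> cup_arcs n al \<and> (p = fst e \<or> p = snd e)"
      then consider "e \<in> NC" | "e \<in> LA" unfolding cup_eq by blast
      then show "e = (- (ys ! (ff i)), ys ! i)"
      proof cases
        case 1 then show ?thesis using NC_ends(1)[OF 1] e True by blast
      next
        case 2
        then obtain k where k: "k < length ys" "e = (- (ys ! (ff k)), ys ! k)" by (auto simp: LA_mem)
        have "p > 0" using ys_pos[OF i(1)] i(2) by simp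
        moreover have "ys ! (ff k) > 0" using ys_pos[OF ff_lt[OF k(1)]] by simp
        ultimately have "p = ys ! k" using e k(2) by auto
        then have "k = i" using ys_inj[OF k(1) i(1)] i(2) by simp
        then show ?thesis using k(2) by simp
      qed
    qed
  next
    case notY: False
    show ?thesis
    proof (cases "- p \<in> Y")
      case True
      then have "- p \<in> set ys" using ys_set by simp
      then obtain i where i: "i < length ys" "ys ! i = - p" by (auto simp: in_set_conv_nth)
      have fi: "ff i < length ys" using ff_lt[OF i(1)] .
      show ?thesis
      proof (rule ex1I[of _ "(- (ys ! (ff (ff i))), ys ! (ff i))"])
        show "(- (ys ! (ff (ff i))), ys ! (ff i)) \<in> cup_arcs n al \<and> (p = fst (- (ys ! (ff (ff i))), ys ! (ff i)) \<or> p = snd (- (ys ! (ff (ff i))), ys ! (ff i)))"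
          unfolding cup_eq using i fi by (auto simp: LA_mem ff_ff)
      next
        fix e assume e: "e \<in> cup_arcs n al \<and> (p = fst e \<or> p = snd e)"
        then consider "e \<in> NC" | "e \<in> LA" unfolding cup_eq by blast
        then show "e = (- (ys ! (ff (ff i))), ys ! (ff i))"
        proof cases
          case 1 then show ?thesis using NC_ends(2)[OF 1] e True by blast
        next
          case 2
          then obtain k where k: "k < length ys" "e = (- (ys ! (ff k)), ys ! k)" by (auto simp: LA_mem)
          have "p < 0" using ys_pos[OF i(1)] i(2) by simp
          moreover have "ys ! k > 0" using ys_pos[OF k(1)] by simp
          ultimately have "p = - (ys ! (ff k))" using e k(2) by auto
          then have "ff k = i" using ys_inj[OF ff_lt[OF k(1)] i(1)] i(2) by simp
          then have "k = ff i" using ff_ff[of k] by simp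
          then show ?thesis using k(2) ff_ff by simp
        qed
      qed
    next
      case notY2: False
      obtain e where e: "e \<in> Gm" "p = fst e \<or> p = snd e" using Gm_ex[OF pX] by blast
      have "e \<notin> crossing_arcs Gm"
      proof
        assume c: "e \<in> crossing_arcs Gm"
        then have ee: "e = (- snd e, snd e)" "snd e \<in> Y" by (rule crs_form)+
        then have "p = - snd e \<or> p = snd e" using e(2) by (metis fst_conv)
        then show False using ee(2) notY notY2 by auto
      qed
      then have eNC: "e \<in> NC" using e(1) by blast
      show ?thesis
      proof (rule ex1I[of _ e])
        show "e \<in> cup_arcs n al \<and> (p = fst e \<or> p = snd e)" using eNC e(2) unfolding cup_eq by blast
      next
        fix e' assume e': "e' \<in> cup_arcs n al \<and> (p = fst e' \<or> p = snd e')"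
        then consider "e' \<in> NC" | "e' \<in> LA" unfolding cup_eq by blast
        then show "e' = e"
        proof cases
          case 1 then show ?thesis using Gm_uniq[OF pX _ _ e(1) e(2)] e' by blast
        next
          case 2
          then obtain k where k: "k < length ys" "e' = (- (ys ! (ff k)), ys ! k)" by (auto simp: LA_mem)
          have "ys ! k \<in> Y" "ys ! (ff k) \<in> Y" using ys_pos k(1) ff_lt by auto
          then show ?thesis using e' k(2) notY notY2 by auto
        qed
      qed
    qed
  qed
qed

lemma LP1: assumes "L \<in> linked_pairs n al"
  shows "\<exists>l \<in> cup_arcs n al. fst l < 0 \<and> 0 < snd l \<and> L = {l, sig l}"
proof -
  obtain j where j: "j < length ys div 2"
    "L = {(- (ys ! (2 * j + 1)), ys ! (2 * j)), (- (ys ! (2 * j)), ys ! (2 * j + 1))}"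
    using assms unfolding linked_pairs_def Let_def by blast
  have j2: "2 * j < length ys" "2 * j + 1 < length ys" using j(1) by auto
  define l where "l = (- (ys ! (2 * j + 1)), ys ! (2 * j))"
  have "l \<in> \<Union> (linked_pairs n al)" using assms j(2) l_def by blast
  then have "l \<in> cup_arcs n al" unfolding cup_arcs_def by blast
  moreover have "fst l < 0" "0 < snd l" using ys_pos[OF j2(1)] ys_pos[OF j2(2)] l_def by auto
  moreover have "L = {l, sig l}" using j(2) l_def by (simp add: sig_def)
  ultimately show ?thesis by blast
qed

lemma LP2: assumes "l \<in> cup_arcs n al" "fst l < 0" "0 < snd l"
  shows "\<exists>L \<in> linked_pairs n al. l \<in> L"
proof -
  have "l \<notin> matching n al - crossing_arcs (matching n al)"
    using assms(2,3) by (auto simp: crossing_arcs_def)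
  then have "l \<in> \<Union> (linked_pairs n al)" using assms(1) unfolding cup_arcs_def by blast
  then show ?thesis by blast
qed

end

theorem lemma3p7:
  fixes n :: nat and w w' :: "int \<Rightarrow> int" and C :: "tarc set"
  assumes "n \<ge> 4" and "in_Wp n w" and "in_Wp n w'" and "C \<in> circles n w' w"
  shows "(crosses_middle C \<longrightarrow>
            (\<forall>L \<in> CD_linked n w' w. meets C L \<longrightarrow> L \<subseteq> C) \<or>
            (\<forall>L \<in> CD_linked n w' w. meets C L \<longrightarrow> card (L \<inter> C) = 1))
       \<and> ((\<forall>L \<in> CD_linked n w' w. meets C L \<longrightarrow> card (L \<inter> C) = 1) \<longrightarrow>
            even (card {L \<in> CD_linked n w' w. meets C L}))
       \<and> ((\<exists>L \<in> CD_linked n w' w. meets C L) \<and>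
          (\<forall>L \<in> CD_linked n w' w. meets C L \<longrightarrow> L \<subseteq> C) \<longrightarrow>
            odd (card {L \<in> CD_linked n w' w. meets C L}))"
proof -
  interpret lw: lb n "signs n w" .
  interpret lw': lb n "signs n w'" .
  interpret t: two "Pts n" "cup_arcs n (signs n w)" "cup_arcs n (signs n w')"
    using lw.pm lw'.pm by (simp add: two_def)
  have AA: "t.AA = CD_arcs n w' w" by (simp add: t.AA_def CD_arcs_def)
  have C: "C \<in> {{f. (e, f) \<in> t.RR\<^sup>*} | e. e \<in> t.AA}"
    using assms(4) unfolding circles_def Let_def t.RR_def AA .
  have Lk1: "\<exists>l\<in>t.AA. cr l \<and> L = {l, tsig l}" if L: "L \<in> CD_linked n w' w" for L
  proof -
    from L consider L0 where "L0 \<in> linked_pairs n (signs n w)" "L = Pair False ` L0"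
      | L0 where "L0 \<in> linked_pairs n (signs n w')" "L = Pair True ` L0"
      unfolding CD_linked_def by blast
    then show ?thesis
    proof cases
      case 1
      obtain l0 where l0: "l0 \<in> cup_arcs n (signs n w)" "fst l0 < 0" "0 < snd l0" "L0 = {l0, sig l0}"
        using lw.LP1[OF 1(1)] by blast
      have "(False, l0) \<in> t.AA" using l0(1) by (simp add: t.AA_def)
      moreover have "cr (False, l0)" using l0 by (simp add: cr_def)
      moreover have "L = {(False, l0), tsig (False, l0)}" using 1(2) l0(4) by (simp add: tsig_def)
      ultimately show ?thesis by blast
    next
      case 2
      obtain l0 where l0: "l0 \<in> cup_arcs n (signs n w')" "fst l0 < 0" "0 < snd l0" "L0 = {l0, sig l0}"
        using lw'.LP1[OF 2(1)] by blast
      have "(True, l0) \<in> t.AA" using l0(1) by (simp add: t.AA_def)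
      moreover have "cr (True, l0)" using l0 by (simp add: cr_def)
      moreover have "L = {(True, l0), tsig (True, l0)}" using 2(2) l0(4) by (simp add: tsig_def)
      ultimately show ?thesis by blast
    qed
  qed
  have Lk2: "\<exists>L\<in>CD_linked n w' w. l \<in> L" if l: "l \<in> t.AA" "cr l" for l
  proof -
    from l(1) consider l0 where "l0 \<in> cup_arcs n (signs n w)" "l = (False, l0)"
      | l0 where "l0 \<in> cup_arcs n (signs n w')" "l = (True, l0)"
      unfolding t.AA_def by blast
    then show ?thesis
    proof cases
      case 1
      obtain L0 where "L0 \<in> linked_pairs n (signs n w)" "l0 \<in> L0"
        using lw.LP2[OF 1(1)] l(2) 1(2) by (auto simp: cr_def)
      then show ?thesis using 1(2) unfolding CD_linked_def by blast
    next
      case 2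
      obtain L0 where "L0 \<in> linked_pairs n (signs n w')" "l0 \<in> L0"
        using lw'.LP2[OF 2(1)] l(2) 2(2) by (auto simp: cr_def)
      then show ?thesis using 2(2) unfolding CD_linked_def by blast
    qed
  qed
  show ?thesis by (rule t.main[OF Lk1 Lk2 C])
qed

end
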